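(* There is a quantum procedure which, given oracle access to $U\in\mathcal{U}_N$ (and its inverse), a set $S\subseteq[n]$ and $\delta\in(0,1]$, outputs a bit and makes $O(1/\sqrt{\delta})$ queries to $U$, such that: if $\mathrm{Inf}_S[U]\ge\delta$ it outputs $1$ with probability at least $9/10$, and if $\mathrm{Inf}_S[U]=0$ it always outputs $0$.
   Context: $N=2^n$, $\mathcal{U}_N$ is the set of $N\times N$ unitaries. For $x\in\mathbb{Z}_4^n$, $\sigma_x=\sigma_{x_1}\otimes\cdots\otimes\sigma_{x_n}$ with $\sigma_0=I,\sigma_1=X,\sigma_2=Y,\sigma_3=Z$, and $\mathrm{supp}(x)=\{i:x_i\ne0\}$. Writing $U=\sum_{x\in\mathbb{Z}_4^n}\widehat{U}(x)\sigma_x$, the influence of $S\subseteq[n]$ on $U$ is $\mathrm{Inf}_S[U]=\sum_{x:\,\mathrm{supp}(x)\cap S\ne\emptyset}|\widehat{U}(x)|^2$. *)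

theory Defs
  imports Complex_Main "Jordan_Normal_Form.Matrix"
begin

definition pauli1 :: "nat \<Rightarrow> complex mat" where
  "pauli1 a = (if a = 1 then mat_of_rows_list 2 [[0, 1], [1, 0]]
     else if a = 2 then mat_of_rows_list 2 [[0, - \<i>], [\<i>, 0]]
     else if a = 3 then mat_of_rows_list 2 [[1, 0], [0, -1]]
     else 1\<^sub>m 2)"

text \<open>Bit of basis index i belonging to qubit k (0-based, k < n); qubit k is the
  k-th tensor factor, i.e. the (n-1-k)-th least significant bit (big-endian).\<close>
definition qbit :: "nat \<Rightarrow> nat \<Rightarrow> nat \<Rightarrow> nat" where
  "qbit n i k = (i div 2 ^ (n - 1 - k)) mod 2"

definition pauli_idx :: "nat \<Rightarrow> nat list set" where
  "pauli_idx n = {x. length x = n \<and> set x \<subseteq> {0..<4}}"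

text \<open>sigma_x = sigma_{x_1} \<otimes> ... \<otimes> sigma_{x_n}\<close>
definition pauli_string :: "nat \<Rightarrow> nat list \<Rightarrow> complex mat" where
  "pauli_string n x = mat (2 ^ n) (2 ^ n)
     (\<lambda>(i, j). \<Prod>k<n. pauli1 (x ! k) $$ (qbit n i k, qbit n j k))"

text \<open>Pauli (Fourier) coefficient: U = sum_x coeff(x) sigma_x, obtained via the
  Hilbert-Schmidt inner product: coeff(x) = tr(sigma_x^dagger U) / 2^n.\<close>
definition pauli_coeff :: "nat \<Rightarrow> complex mat \<Rightarrow> nat list \<Rightarrow> complex" where
  "pauli_coeff n U x = (\<Sum>i<2^n. \<Sum>j<2^n. cnj (pauli_string n x $$ (i, j)) * U $$ (i, j)) / 2 ^ n"

definition supp :: "nat list \<Rightarrow> nat set" where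
  "supp x = {i. i < length x \<and> x ! i \<noteq> 0}"

definition influence :: "nat \<Rightarrow> nat set \<Rightarrow> complex mat \<Rightarrow> real" where
  "influence n S U = (\<Sum>x\<in>{x\<in>pauli_idx n. supp x \<inter> S \<noteq> {}}. (cmod (pauli_coeff n U x))\<^sup>2)"

definition adj :: "complex mat \<Rightarrow> complex mat" where
  "adj A = mat (dim_col A) (dim_row A) (\<lambda>(i, j). cnj (A $$ (j, i)))"

definition unitary_mat :: "nat \<Rightarrow> complex mat \<Rightarrow> bool" where
  "unitary_mat d A \<longleftrightarrow> A \<in> carrier_mat d d \<and> adj A * A = 1\<^sub>m d"

text \<open>A query algorithm acting on n system qubits plus anc ancilla qubits
  (Hilbert space of dimension 2^n * 2^anc, system register = first tensor factor).
  Starting from basis state |0>, it applies gate 0, then for t = 0..nq-1 the query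
  (U or U^dagger = U^{-1} according to inv_q t, tensored with identity on the
  ancillas) followed by gate (t+1); finally it measures in the computational
  basis and outputs 1 iff the outcome lies in accept.  Gates are arbitrary
  unitaries independent of U.\<close>
record qalg =
  anc :: nat
  nq :: nat
  gate :: "nat \<Rightarrow> complex mat"
  inv_q :: "nat \<Rightarrow> bool"
  accept :: "nat set"

definition alg_dim :: "nat \<Rightarrow> qalg \<Rightarrow> nat" where
  "alg_dim n A = 2 ^ n * 2 ^ anc A"

definition valid_alg :: "nat \<Rightarrow> qalg \<Rightarrow> bool" where
  "valid_alg n A \<longleftrightarrow> (\<forall>t\<le>nq A. unitary_mat (alg_dim n A) (gate A t))"

definition tensor_id :: "nat \<Rightarrow> complex mat \<Rightarrow> complex mat" where
  "tensor_id m U = mat (dim_row U * 2 ^ m) (dim_col U * 2 ^ m)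
     (\<lambda>(i, j). if i mod 2 ^ m = j mod 2 ^ m then U $$ (i div 2 ^ m, j div 2 ^ m) else 0)"

definition query_op :: "qalg \<Rightarrow> complex mat \<Rightarrow> nat \<Rightarrow> complex mat" where
  "query_op A U t = tensor_id (anc A) (if inv_q A t then adj U else U)"

fun alg_state :: "nat \<Rightarrow> qalg \<Rightarrow> complex mat \<Rightarrow> nat \<Rightarrow> complex vec" where
  "alg_state n A U 0 = gate A 0 *\<^sub>v unit_vec (alg_dim n A) 0"
| "alg_state n A U (Suc t) = gate A (Suc t) *\<^sub>v (query_op A U t *\<^sub>v alg_state n A U t)"

definition prob_one :: "nat \<Rightarrow> qalg \<Rightarrow> complex mat \<Rightarrow> real" where
  "prob_one n A U = (\<Sum>k\<in>accept A \<inter> {..<alg_dim n A}. (cmod (alg_state n A U (nq A) $ k))\<^sup>2)"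

end

theory Submission
  imports Defs "Jordan_Normal_Form.Determinant"
begin


definition ip :: "complex vec \<Rightarrow> complex vec \<Rightarrow> complex" where
  "ip u v = (\<Sum>i<dim_vec v. cnj (u$i) * v$i)"
definition nsq :: "complex vec \<Rightarrow> real" where
  "nsq v = (\<Sum>i<dim_vec v. (cmod (v$i))^2)"

lemma cnj_mult_self: "cnj z * z = of_real ((cmod z)^2)"
  by (metis complex_norm_square mult.commute)

lemma ip_self: "ip v v = of_real (nsq v)"
  unfolding ip_def nsq_def of_real_sum
  by (intro sum.cong refl) (simp only: cnj_mult_self)

lemma nsq_nonneg: "nsq v \<ge> 0"
  unfolding nsq_def by (intro sum_nonneg) auto

lemma mv_index: "A \<in> carrier_mat r c \<Longrightarrow> v \<in> carrier_vec c \<Longrightarrow> i < r \<Longrightarrow>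
   (A *\<^sub>v v) $ i = (\<Sum>j<c. A$$(i,j) * v$j)"
  by (auto simp: mult_mat_vec_def scalar_prod_def row_def lessThan_atLeast0 intro!: sum.cong)


lemma adj_carrier[simp]: "A \<in> carrier_mat r c \<Longrightarrow> adj A \<in> carrier_mat c r"
  by (auto simp: adj_def)
lemma adj_dims[simp]: "dim_row (adj A) = dim_col A" "dim_col (adj A) = dim_row A"
  by (auto simp: adj_def)
lemma adj_index[simp]: "i < dim_col A \<Longrightarrow> j < dim_row A \<Longrightarrow> adj A $$ (i,j) = cnj (A$$(j,i))"
  by (auto simp: adj_def)
lemma adj_adj[simp]: "adj (adj A) = A"
  by (rule eq_matI) auto
lemma adj_one[simp]: "adj (1\<^sub>m n) = 1\<^sub>m n"
  by (rule eq_matI) auto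
lemma adj_mult: assumes "A \<in> carrier_mat r k" "B \<in> carrier_mat k c"
  shows "adj (A * B) = adj B * adj A"
  using assms
  by (intro eq_matI) (auto simp: scalar_prod_def row_def col_def intro!: sum.cong)
lemma adj_add: assumes "A \<in> carrier_mat r c" "B \<in> carrier_mat r c"
  shows "adj (A + B) = adj A + adj B"
  using assms by (intro eq_matI) auto

lemma ip_adj: assumes A: "A \<in> carrier_mat r c" and u: "u \<in> carrier_vec c" and v: "v \<in> carrier_vec r"
  shows "ip (A *\<^sub>v u) v = ip u (adj A *\<^sub>v v)"
proof -
  have "ip (A *\<^sub>v u) v = (\<Sum>i<r. \<Sum>j<c. cnj (A$$(i,j)) * cnj (u$j) * v$i)"
    unfolding ip_def using A u v
  proof (intro sum.cong refl)
    fix x assume "x \<in> {..<r}"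
    then have "(A *\<^sub>v u) $ x = (\<Sum>j<c. A$$(x,j) * u$j)" using mv_index[OF A u] by simp
    then show "cnj ((A *\<^sub>v u) $ x) * v $ x = (\<Sum>j<c. cnj (A$$(x,j)) * cnj (u$j) * v$x)"
      by (simp add: cnj_sum sum_distrib_right)
  qed (use v in simp)
  also have "\<dots> = (\<Sum>j<c. \<Sum>i<r. cnj (A$$(i,j)) * cnj (u$j) * v$i)"
    by (rule sum.swap)
  also have "\<dots> = ip u (adj A *\<^sub>v v)"
    unfolding ip_def
  proof (rule sum.cong)
    fix x assume "x \<in> {..<dim_vec (adj A *\<^sub>v v)}"
    then have x: "x < c" using A by simp
    have "(adj A *\<^sub>v v) $ x = (\<Sum>i<r. adj A $$ (x,i) * v$i)"
      using mv_index[of "adj A" c r v x] A v x by simp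
    also have "\<dots> = (\<Sum>i<r. cnj (A$$(i,x)) * v$i)" using A x by (intro sum.cong) auto
    finally show "(\<Sum>i<r. cnj (A $$ (i, x)) * cnj (u $ x) * v $ i) = cnj (u $ x) * (adj A *\<^sub>v v) $ x"
      by (simp add: sum_distrib_left mult.assoc mult.left_commute)
  qed (use A in simp)
  finally show ?thesis .
qed

lemma unit_vec_col: assumes "(A::complex mat) \<in> carrier_mat r c" "i < r" "j < c"
  shows "(A *\<^sub>v unit_vec c j) $ i = A $$ (i,j)"
  using assms by simp

lemma mat_eq_vec: assumes A: "(A::complex mat) \<in> carrier_mat r c" and B: "B \<in> carrier_mat r c"
  and h: "\<And>v. v \<in> carrier_vec c \<Longrightarrow> A *\<^sub>v v = B *\<^sub>v v"
  shows "A = B"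
proof (rule eq_matI)
  fix i j assume "i < dim_row B" "j < dim_col B"
  then have ij: "i < r" "j < c" using B by auto
  have "A $$ (i,j) = (A *\<^sub>v unit_vec c j) $ i" using unit_vec_col[OF A ij] by simp
  also have "\<dots> = (B *\<^sub>v unit_vec c j) $ i" using h[of "unit_vec c j"] by simp
  also have "\<dots> = B $$ (i,j)" using unit_vec_col[OF B ij] by simp
  finally show "A $$ (i,j) = B $$ (i,j)" .
qed (use A B in auto)

lemma unitary_by_vec: assumes A: "A \<in> carrier_mat d d"
  and h: "\<And>v. v \<in> carrier_vec d \<Longrightarrow> adj A *\<^sub>v (A *\<^sub>v v) = v"
  shows "unitary_mat d A"
proof -
  have "adj A * A = 1\<^sub>m d"
  proof (rule mat_eq_vec[of _ d d])
    fix v :: "complex vec" assume v: "v \<in> carrier_vec d"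
    have "(adj A * A) *\<^sub>v v = adj A *\<^sub>v (A *\<^sub>v v)" using A v by (auto intro!: assoc_mult_mat_vec)
    then show "(adj A * A) *\<^sub>v v = 1\<^sub>m d *\<^sub>v v" using h[OF v] v by simp
  qed (use A in auto)
  then show ?thesis using A unfolding unitary_mat_def by simp
qed

lemma unitary_carrier: "unitary_mat d A \<Longrightarrow> A \<in> carrier_mat d d"
  unfolding unitary_mat_def by simp

lemma unitary_vec: assumes "unitary_mat d A" "v \<in> carrier_vec d"
  shows "adj A *\<^sub>v (A *\<^sub>v v) = v"
proof -
  have A: "A \<in> carrier_mat d d" and AA: "adj A * A = 1\<^sub>m d" using assms unfolding unitary_mat_def by auto
  have "adj A *\<^sub>v (A *\<^sub>v v) = (adj A * A) *\<^sub>v v" using A assms(2) by (auto intro!: assoc_mult_mat_vec[symmetric])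
  then show ?thesis using AA assms(2) by simp
qed

lemma unitary_right: assumes "unitary_mat d A" shows "A * adj A = 1\<^sub>m d"
  using assms mat_mult_left_right_inverse[of "adj A" d A] unfolding unitary_mat_def by auto

lemma unitary_adj: assumes "unitary_mat d A" shows "unitary_mat d (adj A)"
  using unitary_right[OF assms] assms unfolding unitary_mat_def by auto

lemma unitary_one: "unitary_mat d (1\<^sub>m d)"
  unfolding unitary_mat_def by simp

lemma unitary_mult: assumes "unitary_mat d A" "unitary_mat d B" shows "unitary_mat d (A * B)"
proof (rule unitary_by_vec)
  have A: "A \<in> carrier_mat d d" and B: "B \<in> carrier_mat d d" using assms unitary_carrier by auto
  show "A * B \<in> carrier_mat d d" using A B by auto
  fix v :: "complex vec" assume v: "v \<in> carrier_vec d"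
  have "adj (A * B) *\<^sub>v ((A * B) *\<^sub>v v) = adj B *\<^sub>v (adj A *\<^sub>v (A *\<^sub>v (B *\<^sub>v v)))"
    using A B v by (simp add: adj_mult[OF A B] assoc_mult_mat_vec[of _ d d _ d])
  also have "\<dots> = v" using assms v B by (simp add: unitary_vec)
  finally show "adj (A * B) *\<^sub>v ((A * B) *\<^sub>v v) = v" .
qed

lemma nsq_unitary: assumes "unitary_mat d A" "v \<in> carrier_vec d"
  shows "nsq (A *\<^sub>v v) = nsq v"
proof -
  have A: "A \<in> carrier_mat d d" using assms unitary_carrier by auto
  have "ip (A *\<^sub>v v) (A *\<^sub>v v) = ip v (adj A *\<^sub>v (A *\<^sub>v v))"
    using A assms(2) by (intro ip_adj) auto
  also have "\<dots> = ip v v" using unitary_vec[OF assms] by simp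
  finally show ?thesis by (simp add: ip_self)
qed


lemma sum_split: "(\<Sum>l<r*(q::nat). h l) = (\<Sum>a<r. \<Sum>b<q. h (a*q+b))"
proof -
  have "(\<Sum>l<r*q. h l) = (\<Sum>a<r. sum h {a*q..<a*q+q})" by (rule sum.nat_group[symmetric])
  also have "\<dots> = (\<Sum>a<r. \<Sum>b<q. h (a*q+b))"
  proof (rule sum.cong[OF refl])
    fix a
    have "sum h {a*q..<a*q+q} = sum h {0 + a*q..<q + a*q}" by (simp add: add.commute)
    also have "\<dots> = (\<Sum>b\<in>{0..<q}. h (b + a*q))" by (rule sum.shift_bounds_nat_ivl)
    finally show "sum h {a*q..<a*q+q} = (\<Sum>b<q. h (a*q+b))" by (simp add: atLeast0LessThan add.commute)
  qed
  finally show ?thesis .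
qed

definition compv :: "nat \<Rightarrow> nat \<Rightarrow> nat \<Rightarrow> complex vec \<Rightarrow> complex vec" where
  "compv r m f v = vec r (\<lambda>w. v $ (w * 2^m + f))"

lemma compv_carrier[simp]: "compv r m f v \<in> carrier_vec r"
  by (simp add: compv_def)
lemma compv_dim[simp]: "dim_vec (compv r m f v) = r"
  by (simp add: compv_def)
lemma compv_index[simp]: "w < r \<Longrightarrow> compv r m f v $ w = v $ (w*2^m+f)"
  by (simp add: compv_def)

lemma idx_lt: assumes "w < r" "f < (2::nat)^m" shows "w*2^m + f < r*2^m"
proof -
  have "w*2^m + f < (w+1)*2^m" using assms by simp
  also have "\<dots> \<le> r*2^m" using assms by (intro mult_right_mono) auto
  finally show ?thesis .
qed

lemma idx_div[simp]: "f < (2::nat)^m \<Longrightarrow> (w*2^m + f) div 2^m = w"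
  by simp
lemma idx_mod[simp]: "f < (2::nat)^m \<Longrightarrow> (w*2^m + f) mod 2^m = f"
  by simp

lemma div_lt: "i < r * (2::nat)^m \<Longrightarrow> i div 2^m < r"
  by (simp add: less_mult_imp_div_less)

lemma tensor_id_carrier[simp]: "A \<in> carrier_mat r r \<Longrightarrow> tensor_id m A \<in> carrier_mat (r*2^m) (r*2^m)"
  by (auto simp: tensor_id_def)

lemma tensor_id_dims[simp]: "dim_row (tensor_id m A) = dim_row A * 2^m" "dim_col (tensor_id m A) = dim_col A * 2^m"
  by (auto simp: tensor_id_def)

lemma tensor_id_index: "A \<in> carrier_mat r r \<Longrightarrow> i < r*2^m \<Longrightarrow> j < r*2^m \<Longrightarrow>
  tensor_id m A $$ (i,j) = (if i mod 2^m = j mod 2^m then A $$ (i div 2^m, j div 2^m) else 0)"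
  by (auto simp: tensor_id_def)

lemma compv_tensor: assumes A: "A \<in> carrier_mat r r" and v: "v \<in> carrier_vec (r*2^m)" and f: "f < 2^m"
  shows "compv r m f (tensor_id m A *\<^sub>v v) = A *\<^sub>v compv r m f v"
proof (rule eq_vecI)
  fix w assume "w < dim_vec (A *\<^sub>v compv r m f v)"
  then have w: "w < r" using A by simp
  have "compv r m f (tensor_id m A *\<^sub>v v) $ w = (tensor_id m A *\<^sub>v v) $ (w*2^m+f)" using w by simp
  also have "\<dots> = (\<Sum>l<r*2^m. tensor_id m A $$ (w*2^m+f, l) * v$l)"
    using mv_index[OF tensor_id_carrier[OF A] v] idx_lt[OF w f] by simp
  also have "\<dots> = (\<Sum>a<r. \<Sum>b<2^m. tensor_id m A $$ (w*2^m+f, a*2^m+b) * v$(a*2^m+b))"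
    by (rule sum_split)
  also have "\<dots> = (\<Sum>a<r. \<Sum>b<2^m. if b = f then A$$(w,a) * v$(a*2^m+f) else 0)"
  proof (intro sum.cong refl)
    fix a b assume a: "a \<in> {..<r}" and b: "b \<in> {..<(2::nat)^m}"
    have "a*2^m+b < r*2^m" using a b idx_lt by auto
    then show "tensor_id m A $$ (w*2^m+f, a*2^m+b) * v$(a*2^m+b) = (if b = f then A$$(w,a) * v$(a*2^m+f) else 0)"
      using tensor_id_index[OF A idx_lt[OF w f]] a b f by auto
  qed
  also have "\<dots> = (\<Sum>a<r. A$$(w,a) * v$(a*2^m+f))" using f by simp
  also have "\<dots> = (A *\<^sub>v compv r m f v) $ w" using mv_index[OF A compv_carrier w] by simp
  finally show "compv r m f (tensor_id m A *\<^sub>v v) $ w = (A *\<^sub>v compv r m f v) $ w" .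
qed (use A in simp)

lemma adj_tensor: assumes A: "A \<in> carrier_mat r r"
  shows "adj (tensor_id m A) = tensor_id m (adj A)"
proof (rule eq_matI)
  fix i j assume "i < dim_row (tensor_id m (adj A))" "j < dim_col (tensor_id m (adj A))"
  then have ij: "i < r*2^m" "j < r*2^m" using A by auto
  then have "i div 2^m < r" "j div 2^m < r" using div_lt by auto
  then show "adj (tensor_id m A) $$ (i, j) = tensor_id m (adj A) $$ (i, j)"
    using ij A tensor_id_index[OF A ij(2,1)] tensor_id_index[OF adj_carrier[OF A] ij]
    by auto
qed (use A in auto)

lemma vec_eq_compv: assumes v: "v \<in> carrier_vec (r*2^m)" and u: "u \<in> carrier_vec (r*2^m)"
  and h: "\<And>f. f < 2^m \<Longrightarrow> compv r m f v = compv r m f u"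
  shows "v = u"
proof (rule eq_vecI)
  fix l assume "l < dim_vec u"
  then have l: "l < r*2^m" using u by simp
  have l2: "l div 2^m < r" "l mod 2^m < (2::nat)^m" using div_lt[OF l] by auto
  have "v $ l = compv r m (l mod 2^m) v $ (l div 2^m)" using l2 by (simp only: compv_index div_mult_mod_eq)
  also have "\<dots> = compv r m (l mod 2^m) u $ (l div 2^m)" using h[OF l2(2)] by simp
  also have "\<dots> = u $ l" using l2 by (simp only: compv_index div_mult_mod_eq)
  finally show "v $ l = u $ l" .
qed (use v u in simp)

lemma unitary_tensor: assumes U: "unitary_mat r A"
  shows "unitary_mat (r*2^m) (tensor_id m A)"
proof (rule unitary_by_vec)
  have A: "A \<in> carrier_mat r r" using U unitary_carrier by auto
  show "tensor_id m A \<in> carrier_mat (r*2^m) (r*2^m)" using A by simp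
  fix v :: "complex vec" assume v: "v \<in> carrier_vec (r*2^m)"
  have Tv: "tensor_id m A *\<^sub>v v \<in> carrier_vec (r*2^m)" by (rule mult_mat_vec_carrier[OF tensor_id_carrier[OF A] v])
  show "adj (tensor_id m A) *\<^sub>v (tensor_id m A *\<^sub>v v) = v"
  proof (rule vec_eq_compv[of _ r m])
    show "adj (tensor_id m A) *\<^sub>v (tensor_id m A *\<^sub>v v) \<in> carrier_vec (r*2^m)"
      using A v by (simp add: adj_tensor[OF A] mult_mat_vec_carrier[OF tensor_id_carrier[OF adj_carrier[OF A]] Tv])
    fix f :: nat assume f: "f < 2^m"
    show "compv r m f (adj (tensor_id m A) *\<^sub>v (tensor_id m A *\<^sub>v v)) = compv r m f v"
      using compv_tensor[OF adj_carrier[OF A] Tv f] compv_tensor[OF A v f] unitary_vec[OF U]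
      by (simp add: adj_tensor[OF A])
  qed (use v in simp)
qed

lemma mod_mult_iff: assumes q: "(q::nat) > 0"
  shows "(i mod (q*p) = j mod (q*p)) \<longleftrightarrow> (i mod q = j mod q \<and> (i div q) mod p = (j div q) mod p)"
proof
  assume h: "i mod (q*p) = j mod (q*p)"
  have "i mod q = (i mod (q*p)) mod q" by (simp add: mod_mult2_eq)
  moreover have "(i div q) mod p = (i mod (q*p)) div q"
    by (simp add: mod_mult2_eq q)
  moreover have "j mod q = (j mod (q*p)) mod q" by (simp add: mod_mult2_eq)
  moreover have "(j div q) mod p = (j mod (q*p)) div q"
    by (simp add: mod_mult2_eq q)
  ultimately show "i mod q = j mod q \<and> (i div q) mod p = (j div q) mod p" using h by simp
next
  assume "i mod q = j mod q \<and> (i div q) mod p = (j div q) mod p"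
  then show "i mod (q*p) = j mod (q*p)" by (simp add: mod_mult2_eq)
qed

lemma tensor_id_add: assumes U: "U \<in> carrier_mat N N"
  shows "tensor_id (a+b) U = tensor_id b (tensor_id a U)"
proof (rule eq_matI)
  have T: "tensor_id a U \<in> carrier_mat (N*2^a) (N*2^a)" using U by simp
  fix i j assume "i < dim_row (tensor_id b (tensor_id a U))" "j < dim_col (tensor_id b (tensor_id a U))"
  then have ij: "i < N*2^a*2^b" "j < N*2^a*2^b" using U by auto
  then have ij': "i < N*2^(a+b)" "j < N*2^(a+b)" by (simp_all add: power_add mult.assoc)
  have d: "i div 2^b < N*2^a" "j div 2^b < N*2^a" using div_lt ij by auto
  have e: "x div 2^b div 2^a = x div 2^(a+b)" for x :: nat
    by (metis div_mult2_eq power_add mult.commute)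
  have m: "(i mod 2^(a+b) = j mod 2^(a+b)) = (i mod 2^b = j mod 2^b \<and> (i div 2^b) mod 2^a = (j div 2^b) mod 2^a)"
    using mod_mult_iff[of "2^b" i "2^a" j] by (simp add: power_add mult.commute)
  show "tensor_id (a + b) U $$ (i, j) = tensor_id b (tensor_id a U) $$ (i, j)"
    using tensor_id_index[OF T ij] tensor_id_index[OF U ij'] tensor_id_index[OF U d] m e
    by auto
qed (use U in \<open>auto simp: power_add mult.assoc\<close>)


lemma pauli1_orth: "\<lbrakk>x < 4; y < 4\<rbrakk> \<Longrightarrow>
  (\<Sum>a<2. \<Sum>b<2. cnj (pauli1 x $$ (a,b)) * pauli1 y $$ (a,b)) = (if x = y then 2 else 0)"
  apply (simp add: numeral_2_eq_2 lessThan_Suc)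
  apply (auto simp: pauli1_def mat_of_rows_list_def less_Suc_eq numeral_eq_Suc)
  done

lemma qbit_zero: assumes "a < 2" "b < 2^n" shows "qbit (Suc n) (a*2^n+b) 0 = a"
proof -
  have e: "Suc n - 1 - 0 = n" by simp
  have "(a*2^n+b) div 2^n = a" using assms(2) by (rule idx_div)
  then show ?thesis unfolding qbit_def e using assms(1) by simp
qed

lemma qbit_suc: assumes a: "a < 2" and b: "b < 2^n" and k: "k < n"
  shows "qbit (Suc n) (a*2^n+b) (Suc k) = qbit n b k"
proof -
  obtain p where n: "n = p + Suc k" using k less_imp_Suc_add[OF k] by auto
  have e1: "Suc n - 1 - Suc k = p" "n - 1 - k = p" using n by auto
  have h0: "(2::nat)^n = 2^p * (2 * 2^k)" unfolding n power_add by simp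
  have h1: "a*2^n + b = b + (2*(a*2^k)) * 2^p" unfolding h0 by (simp only: ac_simps)
  have h2: "(b + (2*(a*2^k)) * 2^p) div 2^p = 2*(a*2^k) + b div 2^p"
    by (rule div_mult_self1) simp
  have "((a*2^n+b) div 2^p) mod 2 = (b div 2^p) mod 2" unfolding h1 h2 by simp
  then show ?thesis unfolding qbit_def e1 .
qed
lemma qbit_prod_sum: "(\<Sum>i<2^n. \<Prod>k<n. g k (qbit n i k)) = (\<Prod>k<n. g k 0 + (g k 1 :: 'a::comm_semiring_1))"
proof (induction n arbitrary: g)
  case 0
  then show ?case by simp
next
  case (Suc n)
  have "(\<Sum>i<2^Suc n. \<Prod>k<Suc n. g k (qbit (Suc n) i k))
      = (\<Sum>a<2. \<Sum>b<2^n. \<Prod>k<Suc n. g k (qbit (Suc n) ((a::nat)*2^n+b) k))"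
    using sum_split[where r=2 and q="2^n" and h="\<lambda>i. \<Prod>k<Suc n. g k (qbit (Suc n) i k)"] by simp
  also have "\<dots> = (\<Sum>a<2. \<Sum>b<2^n. g 0 a * (\<Prod>k<n. g (Suc k) (qbit n b k)))"
  proof (intro sum.cong refl)
    fix a b :: nat assume a: "a \<in> {..<2}" and b: "b \<in> {..<(2::nat)^n}"
    have "(\<Prod>k<Suc n. g k (qbit (Suc n) (a*2^n+b) k))
       = g 0 (qbit (Suc n) (a*2^n+b) 0) * (\<Prod>k<n. g (Suc k) (qbit (Suc n) (a*2^n+b) (Suc k)))"
      by (rule prod.lessThan_Suc_shift)
    also have "\<dots> = g 0 a * (\<Prod>k<n. g (Suc k) (qbit n b k))"
      using a b by (simp add: qbit_zero qbit_suc)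
    finally show "(\<Prod>k<Suc n. g k (qbit (Suc n) (a*2^n+b) k)) = g 0 a * (\<Prod>k<n. g (Suc k) (qbit n b k))" .
  qed
  also have "\<dots> = (\<Sum>a<2. g 0 a * (\<Prod>k<n. g (Suc k) 0 + g (Suc k) 1))"
    using Suc.IH[of "\<lambda>k. g (Suc k)"] by (simp only: sum_distrib_left[symmetric])
  also have "\<dots> = (g 0 0 + g 0 1) * (\<Prod>k<n. g (Suc k) 0 + g (Suc k) 1)"
    by (simp add: numeral_2_eq_2 lessThan_Suc distrib_right add.commute)
  also have "\<dots> = (\<Prod>k<Suc n. g k 0 + g k 1)"
    by (rule prod.lessThan_Suc_shift[symmetric])
  finally show ?case .
qed

lemma qbit_prod_sum2: "(\<Sum>i<2^n. \<Sum>j<2^n. \<Prod>k<n. f k (qbit n i k) (qbit n j k))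
   = (\<Prod>k<n. f k 0 0 + f k 0 1 + f k 1 0 + (f k 1 1 :: 'a::comm_semiring_1))"
proof -
  have "(\<Sum>i<2^n. \<Sum>j<2^n. \<Prod>k<n. f k (qbit n i k) (qbit n j k))
     = (\<Sum>i<2^n. \<Prod>k<n. f k (qbit n i k) 0 + f k (qbit n i k) 1)"
    by (intro sum.cong refl qbit_prod_sum)
  also have "\<dots> = (\<Prod>k<n. (f k 0 0 + f k 0 1) + (f k 1 0 + f k 1 1))"
    by (rule qbit_prod_sum[where n=n and g="\<lambda>k a. f k a 0 + f k a 1"])
  finally show ?thesis by (simp add: add.assoc)
qed

lemma pauli_string_index: "i < 2^n \<Longrightarrow> j < 2^n \<Longrightarrow>
   pauli_string n x $$ (i,j) = (\<Prod>k<n. pauli1 (x ! k) $$ (qbit n i k, qbit n j k))"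
  by (simp add: pauli_string_def)

lemma sum2: "(\<Sum>a<2::nat. \<Sum>b<2::nat. h a b) = h 0 0 + h 0 1 + h 1 0 + (h 1 1 :: 'a::comm_monoid_add)"
  by (simp add: numeral_2_eq_2 lessThan_Suc ac_simps)

lemma pauli_string_orth: assumes x: "x \<in> pauli_idx n" and y: "y \<in> pauli_idx n"
  shows "(\<Sum>i<2^n. \<Sum>j<2^n. cnj (pauli_string n x $$ (i,j)) * pauli_string n y $$ (i,j))
     = (if x = y then 2^n else 0)"
proof -
  define F where "F = (\<lambda>k a b. cnj (pauli1 (x!k) $$ (a,b)) * pauli1 (y!k) $$ (a,b))"
  have xk: "k < n \<Longrightarrow> x ! k < 4" and yk: "k < n \<Longrightarrow> y ! k < 4" for k
    using x y unfolding pauli_idx_def by (auto simp: subset_iff)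
  have "(\<Sum>i<2^n. \<Sum>j<2^n. cnj (pauli_string n x $$ (i,j)) * pauli_string n y $$ (i,j))
     = (\<Sum>i<2^n. \<Sum>j<2^n. \<Prod>k<n. cnj (pauli1 (x!k) $$ (qbit n i k, qbit n j k)) * pauli1 (y!k) $$ (qbit n i k, qbit n j k))"
    by (intro sum.cong refl) (simp add: pauli_string_index cnj_prod prod.distrib)
  also have "\<dots> = (\<Prod>k<n. F k 0 0 + F k 0 1 + F k 1 0 + F k 1 1)"
    unfolding F_def by (rule qbit_prod_sum2)
  also have "\<dots> = (\<Prod>k<n. (\<Sum>a<2. \<Sum>b<2. cnj (pauli1 (x!k) $$ (a,b)) * pauli1 (y!k) $$ (a,b)))"
    unfolding F_def by (simp add: sum2)
  also have "\<dots> = (\<Prod>k<n. if x!k = y!k then 2 else 0)"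
    by (intro prod.cong refl) (simp add: pauli1_orth xk yk)
  also have "\<dots> = (if x = y then 2^n else 0)"
  proof (cases "x = y")
    case True then show ?thesis by simp
  next
    case False
    have lx: "length x = n" "length y = n" using x y unfolding pauli_idx_def by auto
    then obtain k where k: "k < n" "x!k \<noteq> y!k" using False nth_equalityI by metis
    have "(\<Prod>k<n. if x!k = y!k then 2 else 0) = (0::complex)"
      by (rule prod_zero) (use k in auto)
    then show ?thesis using False by simp
  qed
  finally show ?thesis .
qed

abbreviation NN :: "nat \<Rightarrow> nat" where "NN n \<equiv> 2^n"

definition ev :: "nat \<Rightarrow> nat list \<Rightarrow> complex vec" where
  "ev n x = vec (2^n * 2^n) (\<lambda>w. pauli_string n x $$ (w div 2^n, w mod 2^n) / complex_of_real (sqrt (2^n)))"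

lemma ev_carrier[simp]: "ev n x \<in> carrier_vec (2^n*2^n)" by (simp add: ev_def)
lemma ev_dim[simp]: "dim_vec (ev n x) = 2^n*2^n" by (simp add: ev_def)

lemma sum_pairs: "(\<Sum>w<2^n*2^n. h (w div 2^n) (w mod 2^n)) = (\<Sum>i<(2::nat)^n. \<Sum>j<(2::nat)^n. h i j)"
  by (subst sum_split) simp

lemma sqrt_sq_c: "complex_of_real (sqrt (2^n)) * complex_of_real (sqrt (2^n)) = 2^n"
proof -
  have "sqrt (2^n) * sqrt (2^n) = (2::real)^n" by simp
  then show ?thesis by (metis of_real_mult of_real_numeral of_real_power)
qed

lemma ip_ev: assumes x: "x \<in> pauli_idx n" and y: "y \<in> pauli_idx n"
  shows "ip (ev n x) (ev n y) = (if x = y then 1 else 0)"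
proof -
  let ?c = "complex_of_real (sqrt (2^n))"
  have c0: "?c \<noteq> 0" by simp
  have "ip (ev n x) (ev n y) = (\<Sum>w<2^n*2^n. cnj (pauli_string n x $$ (w div 2^n, w mod 2^n)) * pauli_string n y $$ (w div 2^n, w mod 2^n) / 2^n)"
    unfolding ip_def
  proof (intro sum.cong)
    fix w :: nat assume "w \<in> {..<2^n*2^n}"
    then have "w < 2^n*2^n" by simp
    then show "cnj (ev n x $ w) * ev n y $ w = cnj (pauli_string n x $$ (w div 2^n, w mod 2^n)) * pauli_string n y $$ (w div 2^n, w mod 2^n) / 2^n"
      unfolding ev_def sqrt_sq_c[symmetric] by simp
  qed simp
  also have "\<dots> = (\<Sum>i<2^n. \<Sum>j<2^n. cnj (pauli_string n x $$ (i,j)) * pauli_string n y $$ (i,j)) / 2^n"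
    by (subst sum_pairs[where n=n and h="\<lambda>i j. cnj (pauli_string n x $$ (i,j)) * pauli_string n y $$ (i,j) / 2^n"])
       (simp add: sum_divide_distrib)
  also have "\<dots> = (if x = y then 1 else 0)" using pauli_string_orth[OF x y] by simp
  finally show ?thesis .
qed


definition ImS :: "complex \<Rightarrow> complex mat \<Rightarrow> complex mat" where
  "ImS c M = mat (dim_row M) (dim_col M) (\<lambda>(i,j). (if i = j then 1 else 0) - c * M$$(i,j))"

lemma ImS_carrier[simp]: "M \<in> carrier_mat d d \<Longrightarrow> ImS c M \<in> carrier_mat d d"
  by (simp add: ImS_def)

lemma ImS_mult: assumes M: "M \<in> carrier_mat d d" and v: "v \<in> carrier_vec d"
  shows "ImS c M *\<^sub>v v = v - c \<cdot>\<^sub>v (M *\<^sub>v v)"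
proof (rule eq_vecI)
  fix i assume "i < dim_vec (v - c \<cdot>\<^sub>v (M *\<^sub>v v))"
  then have i: "i < d" using v M by simp
  have "(ImS c M *\<^sub>v v) $ i = (\<Sum>j<d. ((if i = j then 1 else 0) - c * M$$(i,j)) * v$j)"
    using mv_index[OF ImS_carrier[OF M] v i] M i by (auto simp: ImS_def intro!: sum.cong)
  also have "\<dots> = (\<Sum>j<d. (if i = j then v$j else 0) - c * (M$$(i,j) * v$j))"
    by (intro sum.cong) (auto simp: algebra_simps)
  also have "\<dots> = (\<Sum>j<d. (if i = j then v$j else 0)) - c * (\<Sum>j<d. M$$(i,j) * v$j)"
    by (simp add: sum_subtractf sum_distrib_left)
  also have "\<dots> = v$i - c * (M *\<^sub>v v) $ i" using i mv_index[OF M v i] by simp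
  finally show "(ImS c M *\<^sub>v v) $ i = (v - c \<cdot>\<^sub>v (M *\<^sub>v v)) $ i" using i v M by simp
qed (use M v in \<open>simp add: ImS_def\<close>)

lemma adj_ImS: assumes M: "M \<in> carrier_mat d d" shows "adj (ImS c M) = ImS (cnj c) (adj M)"
  using M by (intro eq_matI) (auto simp: ImS_def)

definition outer :: "complex vec \<Rightarrow> complex mat" where
  "outer u = mat (dim_vec u) (dim_vec u) (\<lambda>(i,j). u$i * cnj (u$j))"

lemma outer_carrier[simp]: "u \<in> carrier_vec d \<Longrightarrow> outer u \<in> carrier_mat d d"
  by (simp add: outer_def)

lemma adj_outer: "u \<in> carrier_vec d \<Longrightarrow> adj (outer u) = outer u"
  by (intro eq_matI) (auto simp: outer_def)

lemma outer_mult: assumes u: "u \<in> carrier_vec d" and v: "v \<in> carrier_vec d"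
  shows "outer u *\<^sub>v v = ip u v \<cdot>\<^sub>v u"
proof (rule eq_vecI)
  fix i assume "i < dim_vec (ip u v \<cdot>\<^sub>v u)"
  then have i: "i < d" using u by simp
  have "(outer u *\<^sub>v v) $ i = (\<Sum>j<d. u$i * cnj (u$j) * v$j)"
    using mv_index[OF outer_carrier[OF u] v i] u i by (auto simp: outer_def intro!: sum.cong)
  also have "\<dots> = ip u v * u $ i" using u v unfolding ip_def
    by (simp add: sum_distrib_left sum_distrib_right mult.assoc mult.left_commute mult.commute)
  finally show "(outer u *\<^sub>v v) $ i = (ip u v \<cdot>\<^sub>v u) $ i" using i u by simp
qed (use u v in \<open>simp add: outer_def\<close>)

definition reflm :: "complex vec \<Rightarrow> complex mat" where
  "reflm u = ImS (2 / complex_of_real (nsq u)) (outer u)"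

lemma reflm_carrier[simp]: "u \<in> carrier_vec d \<Longrightarrow> reflm u \<in> carrier_mat d d"
  by (simp add: reflm_def)

lemma reflm_mult: "u \<in> carrier_vec d \<Longrightarrow> v \<in> carrier_vec d \<Longrightarrow>
  reflm u *\<^sub>v v = v - (2 / complex_of_real (nsq u) * ip u v) \<cdot>\<^sub>v u"
  unfolding reflm_def by (simp add: ImS_mult[of _ d] outer_mult smult_smult_assoc)

lemma adj_reflm: "u \<in> carrier_vec d \<Longrightarrow> adj (reflm u) = reflm u"
  unfolding reflm_def by (simp add: adj_ImS[of _ d] adj_outer)

lemma ip_lin_right: assumes "u \<in> carrier_vec d" "v \<in> carrier_vec d" "w \<in> carrier_vec d"
  shows "ip u (v - c \<cdot>\<^sub>v w) = ip u v - c * ip u w"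
  using assms unfolding ip_def
  by (simp add: right_diff_distrib sum_subtractf sum_distrib_left mult.left_commute)

lemma ip_lin_right2: assumes "u \<in> carrier_vec d" "v \<in> carrier_vec d" "w \<in> carrier_vec d"
  shows "ip u (a \<cdot>\<^sub>v v + c \<cdot>\<^sub>v w) = a * ip u v + c * ip u w"
  using assms unfolding ip_def
  by (simp add: distrib_left sum.distrib sum_distrib_left mult.left_commute)

lemma ip_cnj: assumes "u \<in> carrier_vec d" "v \<in> carrier_vec d"
  shows "ip u v = cnj (ip v u)"
  using assms unfolding ip_def by (simp add: cnj_sum mult.commute)

lemma reflm_invol: assumes u: "u \<in> carrier_vec d" and v: "v \<in> carrier_vec d"
  shows "reflm u *\<^sub>v (reflm u *\<^sub>v v) = v"
proof (cases "nsq u = 0")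
  case True
  then show ?thesis using u v by (simp add: reflm_mult[of _ d]) (auto intro!: eq_vecI)
next
  case False
  let ?c = "2 / complex_of_real (nsq u)"
  have uu: "ip u u = complex_of_real (nsq u)" by (rule ip_self)
  have R: "reflm u *\<^sub>v v = v - (?c * ip u v) \<cdot>\<^sub>v u" using reflm_mult[OF u v] .
  have Rc: "reflm u *\<^sub>v v \<in> carrier_vec d" using R u v by simp
  have "ip u (reflm u *\<^sub>v v) = ip u v - ?c * ip u v * ip u u"
    unfolding R using ip_lin_right[OF u v u] by simp
  also have "\<dots> = - ip u v" using False uu by (simp add: field_simps)
  finally have i: "ip u (reflm u *\<^sub>v v) = - ip u v" .
  have e: "reflm u *\<^sub>v (reflm u *\<^sub>v v) = (v - (?c * ip u v) \<cdot>\<^sub>v u) - (?c * - ip u v) \<cdot>\<^sub>v u"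
    using reflm_mult[OF u Rc] i R by simp
  show ?thesis unfolding e using u v by (intro eq_vecI) (auto simp: algebra_simps)
qed

lemma unitary_herm_invol: assumes A: "A \<in> carrier_mat d d" and h: "adj A = A"
  and inv: "\<And>v. v \<in> carrier_vec d \<Longrightarrow> A *\<^sub>v (A *\<^sub>v v) = v"
  shows "unitary_mat d A"
  by (rule unitary_by_vec[OF A]) (simp add: h inv)

lemma unitary_reflm: "u \<in> carrier_vec d \<Longrightarrow> unitary_mat d (reflm u)"
  by (rule unitary_herm_invol[of _ d]) (auto simp: adj_reflm reflm_invol)


abbreviation sq2 :: "nat \<Rightarrow> complex" where "sq2 n \<equiv> complex_of_real (sqrt (2^n))"

definition phiv :: "nat \<Rightarrow> complex vec" where
  "phiv n = vec (2^n*2^n) (\<lambda>w. if w div 2^n = w mod 2^n then 1 / sq2 n else 0)"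

lemma phiv_carrier[simp]: "phiv n \<in> carrier_vec (2^n*2^n)"
  by (simp add: phiv_def)

lemma compv_phiv: assumes f: "f < 2^n"
  shows "compv (2^n) n f (phiv n) = (1 / sq2 n) \<cdot>\<^sub>v unit_vec (2^n) f"
proof (rule eq_vecI)
  fix w assume "w < dim_vec ((1 / sq2 n) \<cdot>\<^sub>v unit_vec (2^n) f)"
  then have w: "w < 2^n" by simp
  have "w*2^n+f < 2^n*2^n" using idx_lt[OF w f] .
  then show "compv (2^n) n f (phiv n) $ w = ((1 / sq2 n) \<cdot>\<^sub>v unit_vec (2^n) f) $ w"
    using w f by (simp add: phiv_def)
qed simp

definition svec :: "nat \<Rightarrow> complex mat \<Rightarrow> complex vec" where
  "svec n U = tensor_id n U *\<^sub>v phiv n"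

lemma svec_carrier[simp]: "U \<in> carrier_mat (2^n) (2^n) \<Longrightarrow> svec n U \<in> carrier_vec (2^n*2^n)"
  unfolding svec_def by (rule mult_mat_vec_carrier[OF tensor_id_carrier phiv_carrier])

lemma svec_index: assumes U: "U \<in> carrier_mat (2^n) (2^n)" and w: "w < 2^n*2^n"
  shows "svec n U $ w = U $$ (w div 2^n, w mod 2^n) / sq2 n"
proof -
  define f where "f = w mod 2^n"
  define i where "i = w div 2^n"
  have f: "f < 2^n" unfolding f_def by simp
  have i: "i < 2^n" unfolding i_def using div_lt w by simp
  have wi: "w = i*2^n + f" unfolding i_def f_def using div_mult_mod_eq[of w "2^n"] by simp
  have "svec n U $ w = compv (2^n) n f (svec n U) $ i" using i wi by simp
  also have "\<dots> = (U *\<^sub>v compv (2^n) n f (phiv n)) $ i"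
    unfolding svec_def using compv_tensor[OF U phiv_carrier f] by simp
  also have "\<dots> = (U *\<^sub>v ((1 / sq2 n) \<cdot>\<^sub>v unit_vec (2^n) f)) $ i" using compv_phiv[OF f] by simp
  also have "\<dots> = (1 / sq2 n) * (U *\<^sub>v unit_vec (2^n) f) $ i"
    using mult_mat_vec[OF U, of "unit_vec (2^n) f" "1 / sq2 n"] i U by simp
  also have "\<dots> = U $$ (i, f) / sq2 n" using unit_vec_col[OF U i f] by simp
  finally show ?thesis unfolding i_def f_def .
qed

lemma nsq_phiv: "nsq (phiv n) = 1"
proof -
  have "nsq (phiv n) = (\<Sum>w<(2::nat)^n*2^n. (\<lambda>i j::nat. if i = j then 1 / 2^n else 0) (w div 2^n) (w mod 2^n))"
    unfolding nsq_def
  proof (intro sum.cong)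
    fix w :: nat assume "w \<in> {..<2^n*2^n}"
    then show "(cmod (phiv n $ w))\<^sup>2 = (\<lambda>i j. if i = j then 1 / 2^n else 0) (w div 2^n) (w mod 2^n)"
      by (simp add: phiv_def norm_divide power_divide)
  qed simp
  also have "\<dots> = (\<Sum>i<(2::nat)^n. \<Sum>j<(2::nat)^n. (if i = j then 1 / 2^n else (0::real)))"
    by (rule sum_pairs)
  also have "\<dots> = 1" by simp
  finally show ?thesis .
qed

lemma coeff_ip: assumes U: "U \<in> carrier_mat (2^n) (2^n)"
  shows "pauli_coeff n U x = ip (ev n x) (svec n U)"
proof -
  have "ip (ev n x) (svec n U) = (\<Sum>w<2^n*2^n. (\<lambda>i j. cnj (pauli_string n x $$ (i,j)) * U $$ (i,j) / 2^n) (w div 2^n) (w mod 2^n))"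
    unfolding ip_def
  proof (intro sum.cong)
    fix w :: nat assume "w \<in> {..<2^n*2^n}"
    then have w: "w < 2^n*2^n" by simp
    show "cnj (ev n x $ w) * svec n U $ w = (\<lambda>i j. cnj (pauli_string n x $$ (i,j)) * U $$ (i,j) / 2^n) (w div 2^n) (w mod 2^n)"
      using w unfolding svec_index[OF U w] ev_def sqrt_sq_c[symmetric] by simp
  qed (use U in simp)
  also have "\<dots> = (\<Sum>i<(2::nat)^n. \<Sum>j<(2::nat)^n. cnj (pauli_string n x $$ (i,j)) * U $$ (i,j) / 2^n)"
    by (rule sum_pairs)
  also have "\<dots> = pauli_coeff n U x"
    unfolding pauli_coeff_def by (simp add: sum_divide_distrib)
  finally show ?thesis by simp
qed

definition Gs :: "nat \<Rightarrow> nat set \<Rightarrow> nat list set" where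
  "Gs n S = {x \<in> pauli_idx n. supp x \<inter> S \<noteq> {}}"

lemma finite_pauli_idx: "finite (pauli_idx n)"
proof -
  have "pauli_idx n = {xs. set xs \<subseteq> {0..<4} \<and> length xs = n}" unfolding pauli_idx_def by auto
  then show ?thesis using finite_lists_length_eq[of "{0..<4::nat}" n] by simp
qed

lemma finite_Gs[simp]: "finite (Gs n S)"
  unfolding Gs_def using finite_pauli_idx by simp

lemma Gs_sub: "x \<in> Gs n S \<Longrightarrow> x \<in> pauli_idx n"
  unfolding Gs_def by simp

definition Pm :: "nat \<Rightarrow> nat set \<Rightarrow> complex mat" where
  "Pm n S = mat (2^n*2^n) (2^n*2^n) (\<lambda>(w,w'). \<Sum>x\<in>Gs n S. ev n x $ w * cnj (ev n x $ w'))"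

lemma Pm_carrier[simp]: "Pm n S \<in> carrier_mat (2^n*2^n) (2^n*2^n)"
  by (simp add: Pm_def)

lemma adj_Pm: "adj (Pm n S) = Pm n S"
  by (intro eq_matI) (auto simp: Pm_def cnj_sum mult.commute)

definition Pv :: "nat \<Rightarrow> nat set \<Rightarrow> complex vec \<Rightarrow> complex vec" where
  "Pv n S v = vec (2^n*2^n) (\<lambda>w. \<Sum>x\<in>Gs n S. ip (ev n x) v * ev n x $ w)"

lemma Pm_mult: assumes v: "v \<in> carrier_vec (2^n*2^n)"
  shows "Pm n S *\<^sub>v v = Pv n S v"
proof (rule eq_vecI)
  fix w assume "w < dim_vec (Pv n S v)"
  then have w: "w < 2^n*2^n" by (simp add: Pv_def)
  have "(Pm n S *\<^sub>v v) $ w = (\<Sum>w'<2^n*2^n. (\<Sum>x\<in>Gs n S. ev n x $ w * cnj (ev n x $ w')) * v $ w')"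
    using mv_index[OF Pm_carrier v w] w by (simp add: Pm_def)
  also have "\<dots> = (\<Sum>x\<in>Gs n S. \<Sum>w'<2^n*2^n. ev n x $ w * (cnj (ev n x $ w') * v $ w'))"
    by (simp add: sum_distrib_right mult.assoc sum.swap[of _ "Gs n S"])
  also have "\<dots> = Pv n S v $ w"
    using w v by (simp add: Pv_def ip_def sum_distrib_left mult.commute)
  finally show "(Pm n S *\<^sub>v v) $ w = Pv n S v $ w" .
qed (simp add: Pv_def Pm_def)

lemma Pv_carrier[simp]: "Pv n S v \<in> carrier_vec (2^n*2^n)"
  by (simp add: Pv_def)

lemma ip_sum_right: assumes "u \<in> carrier_vec d" "\<And>x. x \<in> A \<Longrightarrow> e x \<in> carrier_vec d"
  shows "ip u (vec d (\<lambda>w. \<Sum>x\<in>A. c x * e x $ w)) = (\<Sum>x\<in>A. c x * ip u (e x))"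
proof -
  have "ip u (vec d (\<lambda>w. \<Sum>x\<in>A. c x * e x $ w)) = (\<Sum>i<d. cnj (u$i) * (\<Sum>x\<in>A. c x * e x $ i))"
    by (simp add: ip_def)
  also have "\<dots> = (\<Sum>x\<in>A. \<Sum>i<d. c x * (cnj (u$i) * e x $ i))"
    by (simp add: sum_distrib_left sum.swap[of _ A] mult.left_commute)
  also have "\<dots> = (\<Sum>x\<in>A. c x * ip u (e x))"
  proof (intro sum.cong refl)
    fix x assume "x \<in> A"
    then have "dim_vec (e x) = d" using assms(2) by auto
    then show "(\<Sum>i<d. c x * (cnj (u$i) * e x $ i)) = c x * ip u (e x)"
      by (simp add: ip_def sum_distrib_left)
  qed
  finally show ?thesis .
qed

lemma ip_ev_Pv: assumes y: "y \<in> pauli_idx n"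
  shows "ip (ev n y) (Pv n S v) = (if y \<in> Gs n S then ip (ev n y) v else 0)"
proof -
  have "ip (ev n y) (Pv n S v) = (\<Sum>x\<in>Gs n S. ip (ev n x) v * ip (ev n y) (ev n x))"
    unfolding Pv_def by (rule ip_sum_right) auto
  also have "\<dots> = (\<Sum>x\<in>Gs n S. if x = y then ip (ev n x) v else 0)"
    by (intro sum.cong refl) (auto simp: ip_ev y Gs_sub)
  also have "\<dots> = (if y \<in> Gs n S then ip (ev n y) v else 0)" by simp
  finally show ?thesis .
qed

lemma Pv_idem: "Pv n S (Pv n S v) = Pv n S v"
proof -
  have h: "x \<in> Gs n S \<Longrightarrow> ip (ev n x) (Pv n S v) = ip (ev n x) v" for x
    using ip_ev_Pv[OF Gs_sub, of x n S S v] by simp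
  have "(\<lambda>w. \<Sum>x\<in>Gs n S. ip (ev n x) (Pv n S v) * ev n x $ w) = (\<lambda>w. \<Sum>x\<in>Gs n S. ip (ev n x) v * ev n x $ w)"
    by (intro ext sum.cong refl) (simp add: h)
  then show ?thesis unfolding Pv_def[of n S "Pv n S v"] by (simp add: Pv_def[of n S v])
qed

lemma Pv_herm: assumes u: "u \<in> carrier_vec (2^n*2^n)" and v: "v \<in> carrier_vec (2^n*2^n)"
  shows "ip u (Pv n S v) = ip (Pv n S u) v"
proof -
  have "ip u (Pv n S v) = (\<Sum>x\<in>Gs n S. ip (ev n x) v * ip u (ev n x))"
    unfolding Pv_def by (rule ip_sum_right[OF u]) auto
  also have "\<dots> = (\<Sum>x\<in>Gs n S. cnj (ip (ev n x) u) * ip (ev n x) v)"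
    using ip_cnj[OF u ev_carrier] by (simp add: mult.commute)
  also have "\<dots> = ip (Pv n S u) v"
    using v unfolding ip_def Pv_def
    by (simp add: cnj_sum sum_distrib_left sum_distrib_right sum.swap[of _ "Gs n S"] mult.assoc mult.left_commute)
  finally show ?thesis .
qed

lemma ip_s_Pv: assumes U: "U \<in> carrier_mat (2^n) (2^n)"
  shows "ip (svec n U) (Pv n S (svec n U)) = complex_of_real (influence n S U)"
proof -
  have s: "svec n U \<in> carrier_vec (2^n*2^n)" using U by simp
  have "ip (svec n U) (Pv n S (svec n U)) = (\<Sum>x\<in>Gs n S. ip (ev n x) (svec n U) * ip (svec n U) (ev n x))"
    unfolding Pv_def by (rule ip_sum_right[OF s]) auto
  also have "\<dots> = (\<Sum>x\<in>Gs n S. complex_of_real ((cmod (pauli_coeff n U x))^2))"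
  proof (intro sum.cong refl)
    fix x
    have "ip (svec n U) (ev n x) = cnj (ip (ev n x) (svec n U))" using ip_cnj[OF s ev_carrier] .
    then show "ip (ev n x) (svec n U) * ip (svec n U) (ev n x) = complex_of_real ((cmod (pauli_coeff n U x))^2)"
      by (simp only: complex_norm_square coeff_ip[OF U])
  qed
  also have "\<dots> = complex_of_real (influence n S U)"
    unfolding influence_def Gs_def by simp
  finally show ?thesis .
qed


fun pq :: "real \<Rightarrow> nat \<Rightarrow> real \<times> real" where
  "pq t 0 = (1, 0)"
| "pq t (Suc m) = (t * fst (pq t m) + (t^2 - 1) * snd (pq t m), fst (pq t m) + t * snd (pq t m))"

lemma pq_add: "pq t (a + b) = (fst (pq t a) * fst (pq t b) + (t^2-1) * snd (pq t a) * snd (pq t b),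
                             fst (pq t a) * snd (pq t b) + snd (pq t a) * fst (pq t b))"
  by (induction a) (simp_all add: algebra_simps power2_eq_square)

lemma pq_det: "(fst (pq t m))^2 - (t^2-1) * (snd (pq t m))^2 = 1"
  by (induction m) (simp_all add: algebra_simps power2_eq_square)

lemma aux_dbl: "(p::real)^2 - c*q^2 = 1 \<Longrightarrow> p*p + c*q*q = 2*p^2 - 1"
  by (simp add: power2_eq_square algebra_simps)

lemma pq_double: "fst (pq t (m + m)) = 2 * (fst (pq t m))^2 - 1"
proof -
  have "fst (pq t (m + m)) = fst (pq t m) * fst (pq t m) + (t^2-1) * snd (pq t m) * snd (pq t m)"
    by (simp only: pq_add fst_conv)
  then show ?thesis using aux_dbl[OF pq_det[of t m]] by simp
qed

lemma pq_bound: assumes "t^2 \<le> 1" shows "(fst (pq t m))^2 \<le> 1"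
proof -
  have "(t^2-1) * (snd (pq t m))^2 \<le> 0" using assms by (simp add: mult_nonpos_nonneg)
  then show ?thesis using pq_det[of t m] by linarith
qed

definition rr :: "real \<Rightarrow> nat \<Rightarrow> real" where "rr t j = fst (pq t (2^j))"

lemma rr_0: "rr t 0 = t" by (simp add: rr_def)
lemma rr_Suc: "rr t (Suc j) = 2 * (rr t j)^2 - 1"
proof -
  have e: "(2::nat)^Suc j = 2^j + 2^j" by simp
  show ?thesis unfolding rr_def e by (rule pq_double)
qed

lemma rr_prod: "(\<Prod>j<J. (rr t j)^2) * 4^J * (1 - t^2) = 1 - (rr t J)^2"
proof (induction J)
  case 0 then show ?case by (simp add: rr_0)
next
  case (Suc J)
  have "(\<Prod>j<Suc J. (rr t j)^2) * 4^Suc J * (1 - t^2) = ((\<Prod>j<J. (rr t j)^2) * 4^J * (1 - t^2)) * (4 * (rr t J)^2)"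
    by (simp add: algebra_simps)
  also have "\<dots> = (1 - (rr t J)^2) * (4 * (rr t J)^2)" using Suc.IH by simp
  also have "\<dots> = 1 - (rr t (Suc J))^2" by (simp add: rr_Suc algebra_simps power2_eq_square)
  finally show ?case .
qed

definition is_pow2 :: "nat \<Rightarrow> bool" where "is_pow2 k \<longleftrightarrow> (\<exists>i. k = 2^i)"

lemma not_pow2: assumes "2^j < k" "k < (2::nat)^Suc j" shows "\<not> is_pow2 k"
proof
  assume "is_pow2 k"
  then obtain i where k: "k = 2^i" unfolding is_pow2_def by auto
  have "j < i" using assms(1) unfolding k by (rule power_less_imp_less_exp[rotated]) simp
  moreover have "i < Suc j" using assms(2) unfolding k by (rule power_less_imp_less_exp[rotated]) simp
  ultimately show False by simp
qed

lemma ip_minus_left: assumes "u \<in> carrier_vec d" "w \<in> carrier_vec d" "v \<in> carrier_vec d"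
  shows "ip (u - w) v = ip u v - ip w v"
  using assms unfolding ip_def by (simp add: left_diff_distrib sum_subtractf)

lemma ip_smult_left: assumes "u \<in> carrier_vec d" "v \<in> carrier_vec d"
  shows "ip (c \<cdot>\<^sub>v u) v = cnj c * ip u v"
  using assms unfolding ip_def by (simp add: sum_distrib_left mult.assoc)

lemma ip_smult_right: assumes "u \<in> carrier_vec d" "v \<in> carrier_vec d"
  shows "ip u (c \<cdot>\<^sub>v v) = c * ip u v"
  using assms unfolding ip_def by (simp add: sum_distrib_left mult.left_commute)

lemma nsq_smult: "nsq (c \<cdot>\<^sub>v v) = (cmod c)^2 * nsq v"
  unfolding nsq_def by (simp add: sum_distrib_left norm_mult power_mult_distrib)

locale grover =
  fixes d :: nat and V :: "complex mat" and ph :: "complex vec" and P :: "complex mat"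
  assumes V: "unitary_mat d V"
  and ph: "ph \<in> carrier_vec d" and ph1: "nsq ph = 1"
  and P: "P \<in> carrier_mat d d"
  and Pidem: "\<And>v. v \<in> carrier_vec d \<Longrightarrow> P *\<^sub>v (P *\<^sub>v v) = P *\<^sub>v v"
  and Pherm: "\<And>u v. u \<in> carrier_vec d \<Longrightarrow> v \<in> carrier_vec d \<Longrightarrow> ip u (P *\<^sub>v v) = ip (P *\<^sub>v u) v"
begin

definition "s = V *\<^sub>v ph"
definition "g = P *\<^sub>v s"
definition "b = s - g"
definition "lam = nsq g"
definition "Gm = V * reflm ph * adj V * ImS 2 P"
definition "Pim = ImS 1 P"
definition "tt = 2 * lam - 1"

lemma Vc: "V \<in> carrier_mat d d" using V unitary_carrier by auto
lemma s_c[simp]: "s \<in> carrier_vec d" unfolding s_def using Vc ph by auto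
lemma g_c[simp]: "g \<in> carrier_vec d" unfolding g_def using P by auto
lemma b_c[simp]: "b \<in> carrier_vec d" unfolding b_def by simp
lemma dims[simp]: "dim_vec s = d" "dim_vec g = d" "dim_vec b = d" using s_c g_c b_c by auto
lemma Gm_c: "Gm \<in> carrier_mat d d" unfolding Gm_def
  by (intro mult_carrier_mat[of _ d d] Vc reflm_carrier[OF ph] adj_carrier ImS_carrier P)
lemma Pim_c: "Pim \<in> carrier_mat d d" unfolding Pim_def using P by auto

lemma ss: "ip s s = 1"
  using nsq_unitary[OF V ph] ph1 by (simp add: ip_self s_def)

lemma sg: "ip s g = complex_of_real lam"
proof -
  have "ip s g = ip s (P *\<^sub>v (P *\<^sub>v s))" unfolding g_def using Pidem by simp
  also have "\<dots> = ip g g" unfolding g_def using Pherm P by auto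
  finally show ?thesis by (simp add: ip_self lam_def)
qed

lemma Pg: "P *\<^sub>v g = g" unfolding g_def using Pidem by simp
lemma Pb: "P *\<^sub>v b = 0\<^sub>v d"
  unfolding b_def using Pg P by (simp add: mult_minus_distrib_mat_vec[OF P] g_def)

lemma sb: "ip s b = 1 - complex_of_real lam"
  unfolding b_def using ip_lin_right[OF s_c s_c g_c, of 1] ss sg by simp

lemma bb: "nsq b = 1 - lam"
proof -
  have gb: "ip g b = 0"
  proof -
    have "ip g b = ip (P *\<^sub>v s) b" by (simp add: g_def)
    also have "\<dots> = ip s (P *\<^sub>v b)" using Pherm by simp
    also have "\<dots> = 0" unfolding Pb by (simp add: ip_def)
    finally show ?thesis .
  qed
  have "ip b b = ip s b - ip g b" unfolding b_def[of] using ip_minus_left[OF s_c g_c b_c] by (simp add: b_def)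
  then have "complex_of_real (nsq b) = complex_of_real (1 - lam)" using gb sb by (simp add: ip_self)
  then show ?thesis by (simp only: of_real_eq_iff)
qed

lemma lam_bounds: "0 \<le> lam" "lam \<le> 1"
  using nsq_nonneg[of g] nsq_nonneg[of b] bb unfolding lam_def by auto

lemma G_act: assumes v: "v \<in> carrier_vec d"
  shows "Gm *\<^sub>v v = (ImS 2 P *\<^sub>v v) - (2 * ip s (ImS 2 P *\<^sub>v v)) \<cdot>\<^sub>v s"
proof -
  define x where "x = ImS 2 P *\<^sub>v v"
  have x: "x \<in> carrier_vec d" unfolding x_def by (rule mult_mat_vec_carrier[OF ImS_carrier[OF P] v])
  have c1: "V * reflm ph \<in> carrier_mat d d" using Vc ph by simp
  have c2: "V * reflm ph * adj V \<in> carrier_mat d d" using c1 Vc by simp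
  have ax: "adj V *\<^sub>v x \<in> carrier_vec d" by (rule mult_mat_vec_carrier[OF adj_carrier[OF Vc] x])
  have "Gm *\<^sub>v v = (V * reflm ph * adj V) *\<^sub>v x" unfolding Gm_def x_def
    by (rule assoc_mult_mat_vec[OF c2 ImS_carrier[OF P] v])
  also have "\<dots> = (V * reflm ph) *\<^sub>v (adj V *\<^sub>v x)"
    by (rule assoc_mult_mat_vec[OF c1 adj_carrier[OF Vc] x])
  also have "\<dots> = V *\<^sub>v (reflm ph *\<^sub>v (adj V *\<^sub>v x))"
    by (rule assoc_mult_mat_vec[OF Vc reflm_carrier[OF ph] ax])
  finally have "Gm *\<^sub>v v = V *\<^sub>v (reflm ph *\<^sub>v (adj V *\<^sub>v x))" .
  also have "\<dots> = V *\<^sub>v (adj V *\<^sub>v x - (2 * ip ph (adj V *\<^sub>v x)) \<cdot>\<^sub>v ph)"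
    using reflm_mult[OF ph ax] ph1 by simp
  also have "\<dots> = V *\<^sub>v (adj V *\<^sub>v x) - (2 * ip ph (adj V *\<^sub>v x)) \<cdot>\<^sub>v (V *\<^sub>v ph)"
  proof -
    have sc: "(2 * ip ph (adj V *\<^sub>v x)) \<cdot>\<^sub>v ph \<in> carrier_vec d" using ph by simp
    show ?thesis by (simp add: mult_minus_distrib_mat_vec[OF Vc ax sc] mult_mat_vec[OF Vc ph])
  qed
  also have "V *\<^sub>v (adj V *\<^sub>v x) = x"
  proof -
    have "V *\<^sub>v (adj V *\<^sub>v x) = (V * adj V) *\<^sub>v x" using Vc x by (simp add: assoc_mult_mat_vec[of _ d d _ d])
    then show ?thesis using unitary_right[OF V] x by simp
  qed
  also have "ip ph (adj V *\<^sub>v x) = ip s x" unfolding s_def using ip_adj[OF Vc ph x] by simp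
  finally show ?thesis unfolding x_def s_def .
qed

lemma RP_g: "ImS 2 P *\<^sub>v g = - g"
  unfolding ImS_mult[OF P g_c, of 2] Pg by (intro eq_vecI) simp_all
lemma RP_b: "ImS 2 P *\<^sub>v b = b"
  unfolding ImS_mult[OF P b_c, of 2] Pb by (intro eq_vecI) simp_all

lemma ip_neg: "ip u (- v) = - ip u v"
  unfolding ip_def by (simp add: sum_negf)

lemma s_gb: "s = g + b" unfolding b_def by (intro eq_vecI) simp_all

lemma G_g: "Gm *\<^sub>v g = complex_of_real tt \<cdot>\<^sub>v g + complex_of_real (2*lam) \<cdot>\<^sub>v b"
proof -
  have "Gm *\<^sub>v g = - g - (2 * ip s (- g)) \<cdot>\<^sub>v s" using G_act[OF g_c] RP_g by simp
  also have "\<dots> = - g + (2 * complex_of_real lam) \<cdot>\<^sub>v (g + b)"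
  proof -
    have "ip s (- g) = - complex_of_real lam" using sg by (simp add: ip_neg)
    then show ?thesis by (subst (2) s_gb) (intro eq_vecI; simp)
  qed
  finally show ?thesis unfolding tt_def s_gb
    by (intro eq_vecI) (simp_all add: algebra_simps)
qed

lemma G_b: "Gm *\<^sub>v b = complex_of_real (-2*(1-lam)) \<cdot>\<^sub>v g + complex_of_real tt \<cdot>\<^sub>v b"
proof -
  have "Gm *\<^sub>v b = b - (2 * ip s b) \<cdot>\<^sub>v s" using G_act[OF b_c] RP_b by simp
  also have "\<dots> = b - (2 * (1 - complex_of_real lam)) \<cdot>\<^sub>v (g + b)" using sb s_gb by simp
  finally show ?thesis unfolding tt_def
    by (intro eq_vecI) (simp_all add: algebra_simps)
qed

lemma G_comb: "Gm *\<^sub>v (a \<cdot>\<^sub>v g + c \<cdot>\<^sub>v b) =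
   (complex_of_real tt * a - complex_of_real (2*(1-lam)) * c) \<cdot>\<^sub>v g + (complex_of_real (2*lam) * a + complex_of_real tt * c) \<cdot>\<^sub>v b"
proof -
  have "Gm *\<^sub>v (a \<cdot>\<^sub>v g + c \<cdot>\<^sub>v b) = a \<cdot>\<^sub>v (Gm *\<^sub>v g) + c \<cdot>\<^sub>v (Gm *\<^sub>v b)"
    using Gm_c by (simp add: mult_add_distrib_mat_vec[of _ d d] mult_mat_vec[of _ d d])
  then show ?thesis unfolding G_g G_b
    by (intro eq_vecI) (simp_all add: algebra_simps)
qed

definition "Gpow m v = ((\<lambda>v. Gm *\<^sub>v v) ^^ m) v"

lemma Gpow_b: "Gpow m (c \<cdot>\<^sub>v b) = (c * complex_of_real (-2*(1-lam) * snd (pq tt m))) \<cdot>\<^sub>v g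
                                  + (c * complex_of_real (fst (pq tt m))) \<cdot>\<^sub>v b"
proof (induction m)
  case 0
  then show ?case unfolding Gpow_def by (intro eq_vecI) simp_all
next
  case (Suc m)
  have "Gpow (Suc m) (c \<cdot>\<^sub>v b) = Gm *\<^sub>v Gpow m (c \<cdot>\<^sub>v b)" unfolding Gpow_def by simp
  also have "\<dots> = Gm *\<^sub>v ((c * complex_of_real (-2*(1-lam) * snd (pq tt m))) \<cdot>\<^sub>v g
                                  + (c * complex_of_real (fst (pq tt m))) \<cdot>\<^sub>v b)" using Suc.IH by simp
  also have "\<dots> = (c * complex_of_real (-2*(1-lam) * snd (pq tt (Suc m)))) \<cdot>\<^sub>v g
                                  + (c * complex_of_real (fst (pq tt (Suc m)))) \<cdot>\<^sub>v b"
  proof -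
    define p q where "p = fst (pq tt m)" and "q = snd (pq tt m)"
    have r1: "tt * (-2*(1-lam) * q) - 2*(1-lam) * p = -2*(1-lam) * snd (pq tt (Suc m))"
      unfolding p_def q_def by (simp add: algebra_simps)
    have h: "tt^2 - 1 = -4 * lam * (1 - lam)" unfolding tt_def by (simp add: algebra_simps power2_eq_square)
    have r2: "2*lam * (-2*(1-lam) * q) + tt * p = fst (pq tt (Suc m))"
      unfolding p_def q_def pq.simps fst_conv h by (simp add: algebra_simps)
    have e1: "complex_of_real tt * (c * complex_of_real (-2*(1-lam) * q)) - complex_of_real (2*(1-lam)) * (c * complex_of_real p)
       = c * complex_of_real (-2*(1-lam) * snd (pq tt (Suc m)))"
      unfolding r1[symmetric] by (simp add: algebra_simps)
    have e2: "complex_of_real (2*lam) * (c * complex_of_real (-2*(1-lam) * q)) + complex_of_real tt * (c * complex_of_real p)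
       = c * complex_of_real (fst (pq tt (Suc m)))"
      unfolding r2[symmetric] by (simp add: algebra_simps)
    show ?thesis unfolding G_comb p_def[symmetric] q_def[symmetric] e1 e2 ..
  qed
  finally show ?case .
qed

lemma Pim_comb: "Pim *\<^sub>v (a \<cdot>\<^sub>v g + c \<cdot>\<^sub>v b) = c \<cdot>\<^sub>v b"
proof -
  have "P *\<^sub>v (a \<cdot>\<^sub>v g + c \<cdot>\<^sub>v b) = a \<cdot>\<^sub>v g"
    using P Pg Pb by (simp add: mult_add_distrib_mat_vec[of _ d d] mult_mat_vec[of _ d d]) (intro eq_vecI; simp)
  then show ?thesis unfolding Pim_def using ImS_mult[OF P, of "a \<cdot>\<^sub>v g + c \<cdot>\<^sub>v b" 1]
    by (intro eq_vecI) simp_all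
qed

end


context grover begin

primrec xs :: "nat \<Rightarrow> complex vec" where
  "xs 0 = s"
| "xs (Suc i) = Gm *\<^sub>v (if is_pow2 (Suc i) then Pim *\<^sub>v xs i else xs i)"

lemma xs_c: "xs i \<in> carrier_vec d"
proof (induction i)
  case 0 then show ?case by simp
next
  case (Suc i)
  have "(if is_pow2 (Suc i) then Pim *\<^sub>v xs i else xs i) \<in> carrier_vec d"
    using Suc mult_mat_vec_carrier[OF Pim_c Suc] by simp
  then show ?case using mult_mat_vec_carrier[OF Gm_c] by simp
qed

lemma Gpow_Suc: "Gpow (Suc m) v = Gm *\<^sub>v Gpow m v"
  unfolding Gpow_def by simp

lemma stage: "1 \<le> m \<Longrightarrow> m \<le> 2^j \<Longrightarrow> xs (2^j - 1 + m) = Gpow m (Pim *\<^sub>v xs (2^j - 1))"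
proof (induction m)
  case 0 then show ?case by simp
next
  case (Suc m)
  have pj: "(1::nat) \<le> 2^j" by simp
  show ?case
  proof (cases "m = 0")
    case True
    have e: "2^j - 1 + Suc m = Suc (2^j - 1)" using True pj by simp
    have p: "is_pow2 (Suc (2^j - 1))" using pj unfolding is_pow2_def by (intro exI[of _ j]) simp
    have "xs (Suc (2^j - 1)) = Gm *\<^sub>v (Pim *\<^sub>v xs (2^j - 1))"
      using p by (simp only: xs.simps if_True)
    then show ?thesis unfolding e using True by (simp only: Gpow_Suc) (simp add: Gpow_def)
  next
    case False
    have e: "2^j - 1 + Suc m = Suc (2^j - 1 + m)" using pj by simp
    have np: "\<not> is_pow2 (Suc (2^j - 1 + m))"
    proof (rule not_pow2[of j])
      show "2^j < Suc (2^j - 1 + m)" using False pj by simp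
      show "Suc (2^j - 1 + m) < 2^Suc j" using Suc.prems pj by simp
    qed
    have IH: "xs (2^j - 1 + m) = Gpow m (Pim *\<^sub>v xs (2^j - 1))" using Suc False by simp
    have "xs (Suc (2^j - 1 + m)) = Gm *\<^sub>v xs (2^j - 1 + m)"
      using np by (simp only: xs.simps if_False)
    then show ?thesis unfolding e IH by (simp only: Gpow_Suc)
  qed
qed

definition yv :: "nat \<Rightarrow> complex vec" where "yv j = Pim *\<^sub>v xs (2^j - 1)"

lemma s_comb: "s = 1 \<cdot>\<^sub>v g + 1 \<cdot>\<^sub>v b"
  using s_gb by simp

lemma yv_form: "yv j = complex_of_real (\<Prod>i<j. rr tt i) \<cdot>\<^sub>v b"
proof (induction j)
  case 0
  show ?case unfolding yv_def using Pim_comb[of 1 1] s_comb by simp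
next
  case (Suc j)
  let ?c = "complex_of_real (\<Prod>i<j. rr tt i)"
  have e: "(2::nat)^Suc j - 1 = 2^j - 1 + 2^j" by simp
  have "xs (2^Suc j - 1) = Gpow (2^j) (yv j)" unfolding e yv_def by (rule stage) auto
  also have "\<dots> = (?c * complex_of_real (-2*(1-lam) * snd (pq tt (2^j)))) \<cdot>\<^sub>v g
                 + (?c * complex_of_real (fst (pq tt (2^j)))) \<cdot>\<^sub>v b"
    unfolding Suc.IH by (rule Gpow_b)
  finally have "yv (Suc j) = (?c * complex_of_real (fst (pq tt (2^j)))) \<cdot>\<^sub>v b"
    unfolding yv_def using Pim_comb by simp
  then show ?case by (simp add: rr_def)
qed

lemma yv_c: "yv j \<in> carrier_vec d" unfolding yv_form by simp

lemma nsq_yv: "nsq (yv j) = (\<Prod>i<j. (rr tt i)^2) * (1 - lam)"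
  unfolding yv_form nsq_smult bb norm_of_real power2_abs prod_power_distrib ..

lemma final_bound: "nsq (yv (Suc J)) * 4^(J+2) * lam \<le> 1"
proof -
  have h: "1 - tt^2 = 4 * lam * (1 - lam)" unfolding tt_def by (simp add: algebra_simps power2_eq_square)
  have "nsq (yv (Suc J)) * 4^(J+2) * lam = (\<Prod>i<Suc J. (rr tt i)^2) * 4^(Suc J) * (4 * lam * (1 - lam))"
    unfolding nsq_yv by (simp add: algebra_simps)
  also have "\<dots> = 1 - (rr tt (Suc J))^2" unfolding h[symmetric] by (rule rr_prod)
  also have "\<dots> \<le> 1" by simp
  finally show ?thesis .
qed

lemma rr_lam0: "lam = 0 \<Longrightarrow> (rr tt j)^2 = 1"
  by (induction j) (simp_all add: rr_0 rr_Suc tt_def power2_eq_square algebra_simps)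

lemma final_zero: "lam = 0 \<Longrightarrow> nsq (yv j) = 1"
  unfolding nsq_yv using rr_lam0 by simp

end


definition swp :: "nat \<Rightarrow> nat \<Rightarrow> nat" where
  "swp k f = (if f = 0 then k else if f = k then 0 else f)"

lemma swp_lt: "k < q \<Longrightarrow> f < q \<Longrightarrow> swp k f < q"
  by (simp add: swp_def)
lemma swp_swp[simp]: "swp k (swp k f) = f"
  by (simp add: swp_def)
lemma swp_0[simp]: "swp k 0 = k" by (simp add: swp_def)

definition Perm :: "nat \<Rightarrow> nat \<Rightarrow> nat \<Rightarrow> complex mat" where
  "Perm r m k = mat (r*2^m) (r*2^m) (\<lambda>(i,j). if j = i div 2^m * 2^m + swp k (i mod 2^m) then 1 else 0)"

lemma Perm_carrier[simp]: "Perm r m k \<in> carrier_mat (r*2^m) (r*2^m)"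
  by (simp add: Perm_def)

lemma compv_Perm: assumes v: "v \<in> carrier_vec (r*2^m)" and f: "f < 2^m" and k: "k < 2^m"
  shows "compv r m f (Perm r m k *\<^sub>v v) = compv r m (swp k f) v"
proof (rule eq_vecI)
  fix w assume "w < dim_vec (compv r m (swp k f) v)"
  then have w: "w < r" by simp
  have sk: "swp k f < 2^m" using swp_lt[OF k f] .
  have l0: "w*2^m + swp k f < r*2^m" using idx_lt[OF w sk] .
  have "compv r m f (Perm r m k *\<^sub>v v) $ w = (Perm r m k *\<^sub>v v) $ (w*2^m+f)" using w by simp
  also have "\<dots> = (\<Sum>l<r*2^m. Perm r m k $$ (w*2^m+f, l) * v$l)"
    using mv_index[OF Perm_carrier v idx_lt[OF w f]] .
  also have "\<dots> = (\<Sum>l<r*2^m. if l = w*2^m + swp k f then v$l else 0)"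
    using idx_lt[OF w f] f by (intro sum.cong refl) (auto simp: Perm_def)
  also have "\<dots> = v $ (w*2^m + swp k f)" using l0 by simp
  also have "\<dots> = compv r m (swp k f) v $ w" using w by simp
  finally show "compv r m f (Perm r m k *\<^sub>v v) $ w = compv r m (swp k f) v $ w" .
qed simp

lemma perm_cond: assumes q: "(q::nat) > 0" and k: "k < q" and h: "i = j div q * q + swp k (j mod q)"
  shows "j = i div q * q + swp k (i mod q)"
proof -
  have sl: "swp k (j mod q) < q" using swp_lt[OF k] q by simp
  have "i div q = j div q" unfolding h using sl by simp
  moreover have "i mod q = swp k (j mod q)" unfolding h using sl by simp
  ultimately show ?thesis by simp
qed

lemma adj_Perm: assumes k: "k < 2^m" shows "adj (Perm r m k) = Perm r m k"
proof (rule eq_matI)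
  fix i j assume "i < dim_row (Perm r m k)" "j < dim_col (Perm r m k)"
  then have ij: "i < r*2^m" "j < r*2^m" by (auto simp: Perm_def)
  have q: "(2::nat)^m > 0" by simp
  have iff: "(i = j div 2^m * 2^m + swp k (j mod 2^m)) \<longleftrightarrow> (j = i div 2^m * 2^m + swp k (i mod 2^m))"
    using perm_cond[OF q k] by blast
  show "adj (Perm r m k) $$ (i, j) = Perm r m k $$ (i, j)"
    using ij iff by (simp add: Perm_def)
qed (auto simp: Perm_def)

lemma compv_add: assumes "u \<in> carrier_vec (r*2^m)" "v \<in> carrier_vec (r*2^m)" "f < 2^m"
  shows "compv r m f (u + v) = compv r m f u + compv r m f v"
  using assms by (intro eq_vecI) (auto simp: idx_lt)

lemma compv_zero: "f < 2^m \<Longrightarrow> compv r m f (0\<^sub>v (r*2^m)) = 0\<^sub>v r"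
  by (intro eq_vecI) (auto simp: idx_lt)

lemma compv_unit0: assumes f: "f < 2^m"
  shows "compv r m f (unit_vec (r*2^m) 0) = (if f = 0 then unit_vec r 0 else 0\<^sub>v r)"
  using f by (intro eq_vecI) (auto simp: idx_lt)

context grover begin

lemma Pdims[simp]: "dim_row P = d" "dim_col P = d" using P by auto

lemma Pv_c: "v \<in> carrier_vec d \<Longrightarrow> P *\<^sub>v v \<in> carrier_vec d"
  using mult_mat_vec_carrier[OF P] by auto

lemma Pim_act: "v \<in> carrier_vec d \<Longrightarrow> Pim *\<^sub>v v = v - P *\<^sub>v v"
  unfolding Pim_def using ImS_mult[OF P] by simp

lemma Pim_c': "v \<in> carrier_vec d \<Longrightarrow> Pim *\<^sub>v v \<in> carrier_vec d"
  using mult_mat_vec_carrier[OF Pim_c] by auto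

lemma P_Pim: assumes v: "v \<in> carrier_vec d" shows "P *\<^sub>v (Pim *\<^sub>v v) = 0\<^sub>v d"
proof -
  have "P *\<^sub>v (Pim *\<^sub>v v) = P *\<^sub>v v - P *\<^sub>v (P *\<^sub>v v)"
    unfolding Pim_act[OF v] using mult_minus_distrib_mat_vec[OF P v Pv_c[OF v]] .
  then show ?thesis using Pidem[OF v] Pv_c[OF v] by (auto intro!: eq_vecI)
qed

lemma Pim_P: assumes v: "v \<in> carrier_vec d" shows "Pim *\<^sub>v (P *\<^sub>v v) = 0\<^sub>v d"
  unfolding Pim_act[OF Pv_c[OF v]] Pidem[OF v] using Pv_c[OF v] by (auto intro!: eq_vecI)

lemma Pim_Pim: assumes v: "v \<in> carrier_vec d" shows "Pim *\<^sub>v (Pim *\<^sub>v v) = Pim *\<^sub>v v"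
  using Pim_act[OF Pim_c'[OF v]] P_Pim[OF v] Pim_c'[OF v] by (auto intro!: eq_vecI)

lemma P_plus_Pim: assumes v: "v \<in> carrier_vec d" shows "P *\<^sub>v v + Pim *\<^sub>v v = v"
  unfolding Pim_act[OF v] using v Pv_c[OF v] by (auto intro!: eq_vecI)

lemma RP_act: "v \<in> carrier_vec d \<Longrightarrow> ImS 2 P *\<^sub>v v = v - 2 \<cdot>\<^sub>v (P *\<^sub>v v)"
  using ImS_mult[OF P] by simp

lemma RP_invol: assumes v: "v \<in> carrier_vec d" shows "ImS 2 P *\<^sub>v (ImS 2 P *\<^sub>v v) = v"
proof -
  have c: "v - 2 \<cdot>\<^sub>v (P *\<^sub>v v) \<in> carrier_vec d" using v Pv_c[OF v] by simp
  have "P *\<^sub>v (v - 2 \<cdot>\<^sub>v (P *\<^sub>v v)) = P *\<^sub>v v - 2 \<cdot>\<^sub>v (P *\<^sub>v v)"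
    using mult_minus_distrib_mat_vec[OF P v] Pv_c[OF v] mult_mat_vec[OF P Pv_c[OF v]] Pidem[OF v]
    by simp
  then show ?thesis unfolding RP_act[OF v] RP_act[OF c] using v Pv_c[OF v]
    by (intro eq_vecI) auto
qed

lemma Gm_act: assumes v: "v \<in> carrier_vec d"
  shows "Gm *\<^sub>v v = V *\<^sub>v (reflm ph *\<^sub>v (adj V *\<^sub>v (ImS 2 P *\<^sub>v v)))"
proof -
  define x where "x = ImS 2 P *\<^sub>v v"
  have x: "x \<in> carrier_vec d" unfolding x_def by (rule mult_mat_vec_carrier[OF ImS_carrier[OF P] v])
  have c1: "V * reflm ph \<in> carrier_mat d d" using Vc ph by simp
  have c2: "V * reflm ph * adj V \<in> carrier_mat d d" using c1 Vc by simp
  have ax: "adj V *\<^sub>v x \<in> carrier_vec d" by (rule mult_mat_vec_carrier[OF adj_carrier[OF Vc] x])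
  have "Gm *\<^sub>v v = (V * reflm ph * adj V) *\<^sub>v x" unfolding Gm_def x_def
    by (rule assoc_mult_mat_vec[OF c2 ImS_carrier[OF P] v])
  also have "\<dots> = (V * reflm ph) *\<^sub>v (adj V *\<^sub>v x)"
    by (rule assoc_mult_mat_vec[OF c1 adj_carrier[OF Vc] x])
  also have "\<dots> = V *\<^sub>v (reflm ph *\<^sub>v (adj V *\<^sub>v x))"
    by (rule assoc_mult_mat_vec[OF Vc reflm_carrier[OF ph] ax])
  finally show ?thesis unfolding x_def .
qed

end


lemma mat_vec_zero: "A \<in> carrier_mat r c \<Longrightarrow> A *\<^sub>v 0\<^sub>v c = 0\<^sub>v r"
  by (intro eq_vecI) (auto simp: mv_index)

locale alg_setup =
  fixes n :: nat and S :: "nat set" and U :: "complex mat" and J :: nat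
  assumes U: "unitary_mat (2^n) U"
begin

lemma Uc: "U \<in> carrier_mat (2^n) (2^n)" using U unitary_carrier by auto

abbreviation "dd \<equiv> (2::nat)^n * 2^n"
abbreviation "FF \<equiv> J + 2"
abbreviation "KK \<equiv> (2::nat)^Suc J - 1"
abbreviation "DD \<equiv> dd * 2^FF"

lemma Pidem': assumes v: "v \<in> carrier_vec dd" shows "Pm n S *\<^sub>v (Pm n S *\<^sub>v v) = Pm n S *\<^sub>v v"
proof -
  have "Pm n S *\<^sub>v (Pm n S *\<^sub>v v) = Pv n S (Pv n S v)" using Pm_mult[OF v] Pm_mult[OF Pv_carrier] by simp
  then show ?thesis using Pv_idem Pm_mult[OF v] by simp
qed

lemma Pherm': assumes u: "u \<in> carrier_vec dd" and v: "v \<in> carrier_vec dd"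
  shows "ip u (Pm n S *\<^sub>v v) = ip (Pm n S *\<^sub>v u) v"
  using Pv_herm[OF u v] Pm_mult[OF u] Pm_mult[OF v] by simp

sublocale G: grover dd "tensor_id n U" "phiv n" "Pm n S"
  by unfold_locales (auto simp: unitary_tensor[OF U] nsq_phiv Pidem' Pherm')

definition "Lift A = tensor_id FF A"
definition "Prep = reflm (unit_vec dd 0 - phiv n)"
definition "Flag k = Lift (Pm n S) * Perm dd FF k + Lift G.Pim"
definition "gateA t = (if t = 0 then Lift Prep
   else if odd t then (if t div 2 < KK then Lift (ImS 2 (Pm n S)) else 1\<^sub>m DD) *
                      (if is_pow2 (t div 2 + 1) then Flag (t div 2 + 1) else 1\<^sub>m DD)
   else Lift (reflm (phiv n)))"
definition "Alg = \<lparr>anc = n + FF, nq = 2*KK+1, gate = gateA, inv_q = odd, accept = {m. m mod 2^FF \<noteq> 0}\<rparr>"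

lemma alg_dim_eq: "alg_dim n Alg = DD"
  by (simp add: alg_dim_def Alg_def power_add mult.assoc)

lemma Lift_c: "A \<in> carrier_mat dd dd \<Longrightarrow> Lift A \<in> carrier_mat DD DD"
  unfolding Lift_def by (rule tensor_id_carrier)

lemma Lift_unitary: "unitary_mat dd A \<Longrightarrow> unitary_mat DD (Lift A)"
  unfolding Lift_def by (rule unitary_tensor)

lemma compv_Lift: "A \<in> carrier_mat dd dd \<Longrightarrow> v \<in> carrier_vec DD \<Longrightarrow> f < 2^FF \<Longrightarrow>
   compv dd FF f (Lift A *\<^sub>v v) = A *\<^sub>v compv dd FF f v"
  unfolding Lift_def by (rule compv_tensor)

lemma adj_Lift: "A \<in> carrier_mat dd dd \<Longrightarrow> adj (Lift A) = Lift (adj A)"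
  unfolding Lift_def by (rule adj_tensor)

lemma P_c: "Pm n S \<in> carrier_mat dd dd" by simp

lemma RP_unitary: "unitary_mat dd (ImS 2 (Pm n S))"
proof (rule unitary_herm_invol)
  show "ImS 2 (Pm n S) \<in> carrier_mat dd dd" by simp
  show "adj (ImS 2 (Pm n S)) = ImS 2 (Pm n S)" using adj_ImS[OF P_c, of 2] adj_Pm by simp
  show "\<And>v. v \<in> carrier_vec dd \<Longrightarrow> ImS 2 (Pm n S) *\<^sub>v (ImS 2 (Pm n S) *\<^sub>v v) = v"
    by (rule G.RP_invol)
qed

lemma adj_Pim: "adj G.Pim = G.Pim"
  unfolding G.Pim_def using adj_ImS[OF P_c, of 1] adj_Pm by simp

lemma Flag_c: "Flag k \<in> carrier_mat DD DD"
  unfolding Flag_def using Lift_c[OF P_c] Lift_c[OF G.Pim_c] by simp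

lemma kF: "k \<le> 2^Suc J \<Longrightarrow> k < (2::nat)^FF"
proof -
  assume "k \<le> 2^Suc J"
  moreover have "(2::nat)^Suc J < 2^(J+2)" by simp
  ultimately show ?thesis by linarith
qed

lemma compv_Flag: assumes v: "v \<in> carrier_vec DD" and f: "f < 2^FF" and k: "k < 2^FF"
  shows "compv dd FF f (Flag k *\<^sub>v v) = Pm n S *\<^sub>v compv dd FF (swp k f) v + G.Pim *\<^sub>v compv dd FF f v"
proof -
  have pv: "Perm dd FF k *\<^sub>v v \<in> carrier_vec DD" using mult_mat_vec_carrier[OF Perm_carrier v] .
  have "Flag k *\<^sub>v v = (Lift (Pm n S) * Perm dd FF k) *\<^sub>v v + Lift G.Pim *\<^sub>v v"
    unfolding Flag_def
    by (rule add_mult_distrib_mat_vec[OF mult_carrier_mat[OF Lift_c[OF P_c] Perm_carrier] Lift_c[OF G.Pim_c] v])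
  also have "(Lift (Pm n S) * Perm dd FF k) *\<^sub>v v = Lift (Pm n S) *\<^sub>v (Perm dd FF k *\<^sub>v v)"
    by (rule assoc_mult_mat_vec[OF Lift_c[OF P_c] Perm_carrier v])
  finally have e: "Flag k *\<^sub>v v = Lift (Pm n S) *\<^sub>v (Perm dd FF k *\<^sub>v v) + Lift G.Pim *\<^sub>v v" .
  show ?thesis unfolding e
    using compv_add[OF mult_mat_vec_carrier[OF Lift_c[OF P_c] pv] mult_mat_vec_carrier[OF Lift_c[OF G.Pim_c] v] f]
      compv_Lift[OF P_c pv f] compv_Lift[OF G.Pim_c v f] compv_Perm[OF v f k]
    by simp
qed

lemma adj_Flag: assumes k: "k < 2^FF" shows "adj (Flag k) = Perm dd FF k * Lift (Pm n S) + Lift G.Pim"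
proof -
  have "adj (Flag k) = adj (Lift (Pm n S) * Perm dd FF k) + adj (Lift G.Pim)"
    unfolding Flag_def by (rule adj_add[OF mult_carrier_mat[OF Lift_c[OF P_c] Perm_carrier] Lift_c[OF G.Pim_c]])
  also have "adj (Lift (Pm n S) * Perm dd FF k) = adj (Perm dd FF k) * adj (Lift (Pm n S))"
    by (rule adj_mult[OF Lift_c[OF P_c] Perm_carrier])
  finally show ?thesis using adj_Perm[OF k] adj_Lift[OF P_c] adj_Lift[OF G.Pim_c] adj_Pm adj_Pim by simp
qed

lemma compv_adjFlag: assumes v: "v \<in> carrier_vec DD" and f: "f < 2^FF" and k: "k < 2^FF"
  shows "compv dd FF f (adj (Flag k) *\<^sub>v v) = Pm n S *\<^sub>v compv dd FF (swp k f) v + G.Pim *\<^sub>v compv dd FF f v"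
proof -
  have lv: "Lift (Pm n S) *\<^sub>v v \<in> carrier_vec DD" using mult_mat_vec_carrier[OF Lift_c[OF P_c] v] .
  have "adj (Flag k) *\<^sub>v v = (Perm dd FF k * Lift (Pm n S)) *\<^sub>v v + Lift G.Pim *\<^sub>v v"
    unfolding adj_Flag[OF k]
    by (rule add_mult_distrib_mat_vec[OF mult_carrier_mat[OF Perm_carrier Lift_c[OF P_c]] Lift_c[OF G.Pim_c] v])
  also have "(Perm dd FF k * Lift (Pm n S)) *\<^sub>v v = Perm dd FF k *\<^sub>v (Lift (Pm n S) *\<^sub>v v)"
    by (rule assoc_mult_mat_vec[OF Perm_carrier Lift_c[OF P_c] v])
  finally have e: "adj (Flag k) *\<^sub>v v = Perm dd FF k *\<^sub>v (Lift (Pm n S) *\<^sub>v v) + Lift G.Pim *\<^sub>v v" .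
  have sf: "swp k f < 2^FF" using swp_lt[OF k f] .
  show ?thesis unfolding e
    using compv_add[OF mult_mat_vec_carrier[OF Perm_carrier lv] mult_mat_vec_carrier[OF Lift_c[OF G.Pim_c] v] f]
      compv_Perm[OF lv f k] compv_Lift[OF P_c v sf] compv_Lift[OF G.Pim_c v f]
    by simp
qed

lemma Flag_unitary: assumes k: "k < 2^FF" shows "unitary_mat DD (Flag k)"
proof (rule unitary_by_vec[OF Flag_c])
  fix v :: "complex vec" assume v: "v \<in> carrier_vec DD"
  have w: "Flag k *\<^sub>v v \<in> carrier_vec DD" using mult_mat_vec_carrier[OF Flag_c v] .
  show "adj (Flag k) *\<^sub>v (Flag k *\<^sub>v v) = v"
  proof (rule vec_eq_compv[of _ dd FF])
    show "adj (Flag k) *\<^sub>v (Flag k *\<^sub>v v) \<in> carrier_vec DD"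
      using mult_mat_vec_carrier[OF adj_carrier[OF Flag_c] w] .
    show "v \<in> carrier_vec DD" using v .
    fix f :: nat assume f: "f < 2^FF"
    have sf: "swp k f < 2^FF" using swp_lt[OF k f] .
    define a where "a = compv dd FF f v"
    define c where "c = compv dd FF (swp k f) v"
    have ac: "a \<in> carrier_vec dd" "c \<in> carrier_vec dd" unfolding a_def c_def by simp_all
    have "compv dd FF f (adj (Flag k) *\<^sub>v (Flag k *\<^sub>v v))
       = Pm n S *\<^sub>v (Pm n S *\<^sub>v a + G.Pim *\<^sub>v c) + G.Pim *\<^sub>v (Pm n S *\<^sub>v c + G.Pim *\<^sub>v a)"
      unfolding compv_adjFlag[OF w f k] compv_Flag[OF v sf k] compv_Flag[OF v f k] a_def c_def
      by simp
    also have "\<dots> = Pm n S *\<^sub>v a + G.Pim *\<^sub>v a"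
    proof -
      have pa: "Pm n S *\<^sub>v a \<in> carrier_vec dd" "G.Pim *\<^sub>v c \<in> carrier_vec dd"
        "Pm n S *\<^sub>v c \<in> carrier_vec dd" "G.Pim *\<^sub>v a \<in> carrier_vec dd"
        using ac G.Pv_c G.Pim_c' by auto
      have "Pm n S *\<^sub>v (Pm n S *\<^sub>v a + G.Pim *\<^sub>v c) = Pm n S *\<^sub>v a"
        using mult_add_distrib_mat_vec[OF P_c pa(1,2)] G.Pidem[OF ac(1)] G.P_Pim[OF ac(2)] pa by simp
      moreover have "G.Pim *\<^sub>v (Pm n S *\<^sub>v c + G.Pim *\<^sub>v a) = G.Pim *\<^sub>v a"
        using mult_add_distrib_mat_vec[OF G.Pim_c pa(3,4)] G.Pim_P[OF ac(2)] G.Pim_Pim[OF ac(1)] pa by simp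
      ultimately show ?thesis by simp
    qed
    also have "\<dots> = a" by (rule G.P_plus_Pim[OF ac(1)])
    finally show "compv dd FF f (adj (Flag k) *\<^sub>v (Flag k *\<^sub>v v)) = compv dd FF f v" unfolding a_def .
  qed
qed

lemma e0_phi: "unit_vec dd 0 - phiv n \<in> carrier_vec dd" by simp

lemma Prep_unitary: "unitary_mat dd Prep"
  unfolding Prep_def by (rule unitary_reflm[OF e0_phi])

lemma gate_unitary: assumes tn: "t \<le> 2*KK+1" shows "unitary_mat DD (gateA t)"
proof -
  have odd_case: "unitary_mat DD ((if t div 2 < KK then Lift (ImS 2 (Pm n S)) else 1\<^sub>m DD) *
                      (if is_pow2 (t div 2 + 1) then Flag (t div 2 + 1) else 1\<^sub>m DD))" if "t \<le> 2*KK+1"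
  proof (rule unitary_mult)
    show "unitary_mat DD (if t div 2 < KK then Lift (ImS 2 (Pm n S)) else 1\<^sub>m DD)"
      using Lift_unitary[OF RP_unitary] unitary_one by simp
    have "t div 2 \<le> (2*KK+1) div 2" by (rule div_le_mono[OF that])
    moreover have "(2*KK+1) div 2 = KK" by simp
    moreover have "(1::nat) \<le> 2^Suc J" by simp
    ultimately have "t div 2 + 1 \<le> 2^Suc J" by linarith
    then show "unitary_mat DD (if is_pow2 (t div 2 + 1) then Flag (t div 2 + 1) else 1\<^sub>m DD)"
      using Flag_unitary[OF kF] unitary_one by simp
  qed
  show ?thesis
    unfolding gateA_def
    using Lift_unitary[OF Prep_unitary] odd_case[OF tn] Lift_unitary[OF unitary_reflm[OF phiv_carrier]]
    by simp
qed

lemma valid: "valid_alg n Alg"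
  unfolding valid_alg_def alg_dim_eq using gate_unitary by (simp add: Alg_def)

abbreviation "VV \<equiv> tensor_id n U"

lemma query_eq: "query_op Alg U t = Lift (if odd t then adj VV else VV)"
proof -
  have c: "(if odd t then adj U else U) \<in> carrier_mat (2^n) (2^n)" using Uc by simp
  have "query_op Alg U t = tensor_id (n + FF) (if odd t then adj U else U)"
    unfolding query_op_def by (simp add: Alg_def)
  also have "\<dots> = Lift (tensor_id n (if odd t then adj U else U))"
    unfolding Lift_def by (rule tensor_id_add[OF c])
  also have "tensor_id n (if odd t then adj U else U) = (if odd t then adj VV else VV)"
    using adj_tensor[OF Uc] by simp
  finally show ?thesis .
qed

lemma query_unitary: "unitary_mat DD (query_op Alg U t)"
  unfolding query_eq using Lift_unitary[OF G.V] Lift_unitary[OF unitary_adj[OF G.V]] by simp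

lemma st_props: "t \<le> 2*KK+1 \<Longrightarrow> alg_state n Alg U t \<in> carrier_vec DD \<and> nsq (alg_state n Alg U t) = 1"
proof (induction t)
  case 0
  have u: "unit_vec DD 0 \<in> carrier_vec DD" by simp
  have n1: "nsq (unit_vec DD 0) = 1"
  proof -
    have "nsq (unit_vec DD 0) = (\<Sum>i<DD. if i = 0 then 1 else 0)"
      unfolding nsq_def by (intro sum.cong) auto
    then show ?thesis by simp
  qed
  have gu: "unitary_mat DD (gateA 0)" using gate_unitary by simp
  show ?case unfolding alg_state.simps alg_dim_eq
    using nsq_unitary[OF gu u] n1 mult_mat_vec_carrier[OF unitary_carrier[OF gu] u] by (simp add: Alg_def)
next
  case (Suc t)
  then have IH: "alg_state n Alg U t \<in> carrier_vec DD" "nsq (alg_state n Alg U t) = 1" by auto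
  have gu: "unitary_mat DD (gateA (Suc t))" using gate_unitary Suc.prems by simp
  have qc: "query_op Alg U t *\<^sub>v alg_state n Alg U t \<in> carrier_vec DD"
    using mult_mat_vec_carrier[OF unitary_carrier[OF query_unitary] IH(1)] .
  have "nsq (query_op Alg U t *\<^sub>v alg_state n Alg U t) = 1"
    using nsq_unitary[OF query_unitary IH(1)] IH(2) by simp
  then show ?case unfolding alg_state.simps
    using nsq_unitary[OF gu qc] mult_mat_vec_carrier[OF unitary_carrier[OF gu] qc] by (simp add: Alg_def)
qed


lemma nsq_zero: assumes "nsq v = 0" shows "v = 0\<^sub>v (dim_vec v)"
proof (rule eq_vecI)
  fix i assume i: "i < dim_vec (0\<^sub>v (dim_vec v))"
  have "(\<Sum>i<dim_vec v. (cmod (v$i))^2) = 0" using assms unfolding nsq_def .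
  then have "\<forall>j\<in>{..<dim_vec v}. (cmod (v$j))^2 = 0" by (subst (asm) sum_nonneg_eq_0_iff) auto
  then show "v $ i = 0\<^sub>v (dim_vec v) $ i" using i by simp
qed simp

lemma ip_e0_left: assumes "v \<in> carrier_vec dd" shows "ip (unit_vec dd 0) v = v $ 0"
proof -
  have "ip (unit_vec dd 0) v = (\<Sum>i<dd. if i = 0 then v$i else 0)"
    unfolding ip_def using assms by (intro sum.cong) auto
  then show ?thesis by simp
qed

lemma ip_e0_right: assumes "v \<in> carrier_vec dd" shows "ip v (unit_vec dd 0) = cnj (v $ 0)"
proof -
  have "ip v (unit_vec dd 0) = (\<Sum>i<dd. if i = 0 then cnj (v$i) else 0)"
    unfolding ip_def using assms by (intro sum.cong) auto
  then show ?thesis by simp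
qed

lemma ip_minus_right: assumes "u \<in> carrier_vec d" "v \<in> carrier_vec d" "w \<in> carrier_vec d"
  shows "ip u (v - w) = ip u v - ip u w"
  using assms unfolding ip_def by (simp add: right_diff_distrib sum_subtractf)

lemma prep_e0: "Prep *\<^sub>v unit_vec dd 0 = phiv n"
proof -
  define e where "e = (unit_vec dd 0 :: complex vec)"
  define ph where "ph = phiv n"
  define u where "u = e - ph"
  define c where "c = 1 / sq2 n"
  have ec: "e \<in> carrier_vec dd" and pc: "ph \<in> carrier_vec dd" and uc: "u \<in> carrier_vec dd"
    unfolding e_def ph_def u_def by auto
  have p0: "ph $ 0 = c" unfolding ph_def c_def phiv_def by simp
  have cc: "cnj c = c" unfolding c_def by simp
  have ee: "ip e e = 1" unfolding e_def using ip_e0_left[of "unit_vec dd 0"] by simp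
  have pe: "ip ph e = c" unfolding e_def using ip_e0_right[OF pc] p0 cc by simp
  have ep: "ip e ph = c" unfolding e_def using ip_e0_left[OF pc] p0 by simp
  have pp: "ip ph ph = 1" using ip_self[of ph] nsq_phiv unfolding ph_def by simp
  have ue: "ip u e = 1 - c" unfolding u_def using ip_minus_left[OF ec pc ec] ee pe by simp
  have uu: "ip u u = 2 - 2 * c"
  proof -
    have "ip u u = ip u e - ip u ph" unfolding u_def[of] using ip_minus_right[OF uc ec pc] by (simp add: u_def)
    also have "ip u ph = c - 1" unfolding u_def using ip_minus_left[OF ec pc pc] ep pp by simp
    finally show ?thesis using ue by simp
  qed
  have R: "Prep *\<^sub>v e = e - (2 / complex_of_real (nsq u) * ip u e) \<cdot>\<^sub>v u"
    unfolding Prep_def u_def e_def ph_def using reflm_mult[OF e0_phi] by simp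
  show ?thesis
  proof (cases "nsq u = 0")
    case True
    then have "u = 0\<^sub>v dd" using nsq_zero[of u] uc by simp
    have "e = ph"
    proof (rule eq_vecI)
      fix i assume i: "i < dim_vec ph"
      then have "u $ i = 0" using \<open>u = 0\<^sub>v dd\<close> pc by simp
      then show "e $ i = ph $ i" unfolding u_def using ec pc i by simp
    qed (use ec pc in simp)
    moreover have "e - 0 \<cdot>\<^sub>v u = e" using ec uc by (intro eq_vecI) auto
    ultimately show ?thesis using R True unfolding e_def ph_def by simp
  next
    case False
    have nu: "complex_of_real (nsq u) = 2 * ip u e" using ip_self[of u] uu ue by simp
    then have "ip u e \<noteq> 0" using False by auto
    then have "2 / complex_of_real (nsq u) * ip u e = 1" unfolding nu by simp
    then have "Prep *\<^sub>v e = e - u" unfolding R by simp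
    also have "\<dots> = ph" unfolding u_def using ec pc by (intro eq_vecI) auto
    finally show ?thesis unfolding e_def ph_def .
  qed
qed

lemma Lv_c: "A \<in> carrier_mat dd dd \<Longrightarrow> v \<in> carrier_vec DD \<Longrightarrow> Lift A *\<^sub>v v \<in> carrier_vec DD"
  using mult_mat_vec_carrier[OF Lift_c] by blast

lemma VVc: "VV \<in> carrier_mat dd dd" using G.Vc .
lemma RPc: "ImS 2 (Pm n S) \<in> carrier_mat dd dd" by simp
lemma Rphc: "reflm (phiv n) \<in> carrier_mat dd dd" by simp
lemma aVVc: "adj VV \<in> carrier_mat dd dd" using adj_carrier[OF VVc] .

lemma compv_chain: assumes v: "v \<in> carrier_vec DD" and f: "f < 2^FF"
  shows "compv dd FF f (Lift VV *\<^sub>v (Lift (reflm (phiv n)) *\<^sub>v (Lift (adj VV) *\<^sub>v (Lift (ImS 2 (Pm n S)) *\<^sub>v v))))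
       = G.Gm *\<^sub>v compv dd FF f v"
proof -
  have c1: "Lift (ImS 2 (Pm n S)) *\<^sub>v v \<in> carrier_vec DD" using Lv_c[OF RPc v] .
  have c2: "Lift (adj VV) *\<^sub>v (Lift (ImS 2 (Pm n S)) *\<^sub>v v) \<in> carrier_vec DD" using Lv_c[OF aVVc c1] .
  have c3: "Lift (reflm (phiv n)) *\<^sub>v (Lift (adj VV) *\<^sub>v (Lift (ImS 2 (Pm n S)) *\<^sub>v v)) \<in> carrier_vec DD"
    using Lv_c[OF Rphc c2] .
  show ?thesis
    unfolding compv_Lift[OF VVc c3 f] compv_Lift[OF Rphc c2 f] compv_Lift[OF aVVc c1 f] compv_Lift[OF RPc v f]
    using G.Gm_act[OF compv_carrier] by simp
qed

definition "xi i = Lift VV *\<^sub>v alg_state n Alg U (2*i)"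

lemma st_c: "t \<le> 2*KK+1 \<Longrightarrow> alg_state n Alg U t \<in> carrier_vec DD"
  using st_props by blast

lemma xi_c: "i \<le> KK \<Longrightarrow> xi i \<in> carrier_vec DD"
  unfolding xi_def by (rule Lv_c[OF VVc st_c]) simp

lemma gate_odd: "gateA (Suc (2*i)) = (if i < KK then Lift (ImS 2 (Pm n S)) else 1\<^sub>m DD) *
                      (if is_pow2 (i + 1) then Flag (i + 1) else 1\<^sub>m DD)"
  unfolding gateA_def by simp

lemma gate_even: "gateA (Suc (Suc (2*i))) = Lift (reflm (phiv n))"
  unfolding gateA_def by simp

lemma gate_Alg[simp]: "gate Alg = gateA" by (simp add: Alg_def)

lemma st_odd: "alg_state n Alg U (Suc (2*i)) = gateA (Suc (2*i)) *\<^sub>v xi i"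
  unfolding xi_def by (simp add: query_eq)

lemma xi_Suc: "xi (Suc i) = Lift VV *\<^sub>v (Lift (reflm (phiv n)) *\<^sub>v (Lift (adj VV) *\<^sub>v alg_state n Alg U (Suc (2*i))))"
proof -
  have e: "2 * Suc i = Suc (Suc (2*i))" by simp
  show ?thesis unfolding xi_def e alg_state.simps(2)[of n Alg U "Suc (2*i)"]
    by (simp add: query_eq gate_even)
qed

lemma M_c: "(if is_pow2 (i + 1) then Flag (i + 1) else 1\<^sub>m DD) \<in> carrier_mat DD DD"
  using Flag_c by simp

lemma sim: "i \<le> KK \<Longrightarrow> compv dd FF 0 (xi i) = G.xs i \<and> (\<forall>f. i < f \<longrightarrow> f < 2^FF \<longrightarrow> compv dd FF f (xi i) = 0\<^sub>v dd)"
proof (induction i)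
  case 0
  have e: "unit_vec (alg_dim n Alg) 0 = unit_vec DD 0" unfolding alg_dim_eq ..
  have s0: "alg_state n Alg U 0 = Lift Prep *\<^sub>v unit_vec DD 0"
    unfolding alg_state.simps e by (simp add: Alg_def gateA_def)
  have uc: "unit_vec DD 0 \<in> carrier_vec DD" by simp
  have Pc: "Prep \<in> carrier_mat dd dd" unfolding Prep_def by simp
  have lc: "Lift Prep *\<^sub>v unit_vec DD 0 \<in> carrier_vec DD" using Lv_c[OF Pc uc] .
  have cf: "f < 2^FF \<Longrightarrow> compv dd FF f (xi 0) = VV *\<^sub>v (Prep *\<^sub>v (if f = 0 then unit_vec dd 0 else 0\<^sub>v dd))" for f
    unfolding xi_def using compv_Lift[OF VVc lc] compv_Lift[OF Pc uc] compv_unit0[of f FF dd] s0 by simp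
  have "compv dd FF 0 (xi 0) = G.s" using cf[of 0] prep_e0 by (simp add: G.s_def)
  moreover have "compv dd FF f (xi 0) = 0\<^sub>v dd" if "0 < f" "f < 2^FF" for f
    using cf[OF that(2)] that(1) mat_vec_zero[OF Pc] mat_vec_zero[OF VVc] by simp
  ultimately show ?case by simp
next
  case (Suc i)
  then have iK: "i < KK" and IH: "compv dd FF 0 (xi i) = G.xs i" "\<And>f. i < f \<Longrightarrow> f < 2^FF \<Longrightarrow> compv dd FF f (xi i) = 0\<^sub>v dd"
    by auto
  have xc: "xi i \<in> carrier_vec DD" using xi_c iK by simp
  define M where "M = (if is_pow2 (i + 1) then Flag (i + 1) else 1\<^sub>m DD)"
  have Mc: "M \<in> carrier_mat DD DD" unfolding M_def using M_c .
  define eta where "eta = M *\<^sub>v xi i"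
  have etac: "eta \<in> carrier_vec DD" unfolding eta_def using mult_mat_vec_carrier[OF Mc xc] .
  have k: "i + 1 < 2^FF" using kF[of "i+1"] iK by simp
  have eta0: "compv dd FF 0 eta = (if is_pow2 (Suc i) then G.Pim *\<^sub>v G.xs i else G.xs i)"
  proof (cases "is_pow2 (Suc i)")
    case True
    have "compv dd FF 0 eta = Pm n S *\<^sub>v compv dd FF (i+1) (xi i) + G.Pim *\<^sub>v compv dd FF 0 (xi i)"
      unfolding eta_def M_def using True compv_Flag[OF xc _ k, of 0] by simp
    also have "\<dots> = G.Pim *\<^sub>v G.xs i"
      using IH(1) IH(2)[of "i+1"] k mat_vec_zero[OF P_c] G.Pim_c' G.xs_c by simp
    finally show ?thesis using True by simp
  next
    case False
    then show ?thesis unfolding eta_def M_def using IH(1) xc by simp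
  qed
  have etaf: "compv dd FF f eta = 0\<^sub>v dd" if f: "Suc i < f" "f < 2^FF" for f
  proof (cases "is_pow2 (Suc i)")
    case True
    have sw: "swp (i+1) f = f" using f by (simp add: swp_def)
    have "compv dd FF f eta = Pm n S *\<^sub>v compv dd FF f (xi i) + G.Pim *\<^sub>v compv dd FF f (xi i)"
      unfolding eta_def M_def using True compv_Flag[OF xc f(2) k] sw by simp
    then show ?thesis using IH(2)[of f] f mat_vec_zero[OF P_c] mat_vec_zero[OF G.Pim_c] by simp
  next
    case False
    then show ?thesis unfolding eta_def M_def using IH(2)[of f] f xc by simp
  qed
  have so: "alg_state n Alg U (Suc (2*i)) = Lift (ImS 2 (Pm n S)) *\<^sub>v eta"
    unfolding st_odd gate_odd eta_def M_def[symmetric] using iK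
    by (simp add: assoc_mult_mat_vec[OF Lift_c[OF RPc] Mc xc])
  have cx: "f < 2^FF \<Longrightarrow> compv dd FF f (xi (Suc i)) = G.Gm *\<^sub>v compv dd FF f eta" for f
    unfolding xi_Suc so using compv_chain[OF etac] by simp
  show ?case
  proof
    show "compv dd FF 0 (xi (Suc i)) = G.xs (Suc i)" using cx[of 0] eta0 by simp
    show "\<forall>f. Suc i < f \<longrightarrow> f < 2 ^ FF \<longrightarrow> compv dd FF f (xi (Suc i)) = 0\<^sub>v dd"
      using cx etaf mat_vec_zero[OF G.Gm_c] by simp
  qed
qed

lemma pow2K: "is_pow2 (KK + 1)"
  unfolding is_pow2_def by (intro exI[of _ "Suc J"]) simp

lemma final_comp: "compv dd FF 0 (alg_state n Alg U (Suc (2*KK))) = G.yv (Suc J)"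
proof -
  have xc: "xi KK \<in> carrier_vec DD" using xi_c by simp
  have k: "KK + 1 < 2^FF" using kF[of "KK+1"] by simp
  have "alg_state n Alg U (Suc (2*KK)) = (1\<^sub>m DD * Flag (KK+1)) *\<^sub>v xi KK"
    unfolding st_odd gate_odd using pow2K by simp
  also have "\<dots> = Flag (KK+1) *\<^sub>v xi KK" using left_mult_one_mat[OF Flag_c[of "KK+1"]] by metis
  finally have e: "alg_state n Alg U (Suc (2*KK)) = Flag (KK+1) *\<^sub>v xi KK" .
  have "compv dd FF 0 (Flag (KK+1) *\<^sub>v xi KK) = Pm n S *\<^sub>v compv dd FF (KK+1) (xi KK) + G.Pim *\<^sub>v compv dd FF 0 (xi KK)"
    using compv_Flag[OF xc _ k, of 0] by simp
  also have "\<dots> = G.Pim *\<^sub>v G.xs KK"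
    using sim[of KK] k mat_vec_zero[OF P_c] G.Pim_c' G.xs_c by simp
  also have "\<dots> = G.yv (Suc J)" unfolding G.yv_def ..
  finally show ?thesis unfolding e .
qed

lemma prob_formula: assumes v: "v \<in> carrier_vec DD"
  shows "(\<Sum>k\<in>{m. m mod 2^FF \<noteq> 0} \<inter> {..<DD}. (cmod (v$k))^2) = nsq v - nsq (compv dd FF 0 v)"
proof -
  let ?h = "\<lambda>k. (cmod (v$k))^2"
  have "(\<Sum>k\<in>{m. m mod 2^FF \<noteq> 0} \<inter> {..<DD}. ?h k) = (\<Sum>k\<in>{..<DD}. if k mod 2^FF \<noteq> 0 then ?h k else 0)"
    by (subst Int_commute) (simp add: sum.inter_restrict)
  also have "\<dots> = (\<Sum>w<dd. \<Sum>f<2^FF. if f \<noteq> 0 then ?h (w*2^FF+f) else 0)"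
    by (subst sum_split) simp
  finally have A: "(\<Sum>k\<in>{m. m mod 2^FF \<noteq> 0} \<inter> {..<DD}. ?h k) = (\<Sum>w<dd. \<Sum>f<2^FF. if f \<noteq> 0 then ?h (w*2^FF+f) else 0)" .
  have "nsq v = (\<Sum>k<DD. ?h k)" unfolding nsq_def using v by simp
  also have "\<dots> = (\<Sum>w<dd. \<Sum>f<2^FF. ?h (w*2^FF+f))" by (rule sum_split)
  also have "\<dots> = (\<Sum>w<dd. ?h (w*2^FF) + (\<Sum>f<2^FF. if f \<noteq> 0 then ?h (w*2^FF+f) else 0))"
  proof (rule sum.cong[OF refl])
    fix w
    have "(\<Sum>f<2^FF. ?h (w*2^FF+f)) = (\<Sum>f<2^FF. (if f = 0 then ?h (w*2^FF+f) else 0) + (if f \<noteq> 0 then ?h (w*2^FF+f) else 0))"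
      by (intro sum.cong) auto
    also have "\<dots> = ?h (w*2^FF) + (\<Sum>f<2^FF. if f \<noteq> 0 then ?h (w*2^FF+f) else 0)"
      by (simp add: sum.distrib)
    finally show "(\<Sum>f<2^FF. ?h (w*2^FF+f)) = ?h (w*2^FF) + (\<Sum>f<2^FF. if f \<noteq> 0 then ?h (w*2^FF+f) else 0)" .
  qed
  also have "\<dots> = nsq (compv dd FF 0 v) + (\<Sum>w<dd. \<Sum>f<2^FF. if f \<noteq> 0 then ?h (w*2^FF+f) else 0)"
    unfolding nsq_def by (simp add: sum.distrib)
  finally show ?thesis using A by simp
qed

lemma nq_Alg: "nq Alg = Suc (2*KK)" by (simp add: Alg_def)
lemma accept_Alg: "accept Alg = {m. m mod 2^FF \<noteq> 0}" by (simp add: Alg_def)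

lemma prob_eq: "prob_one n Alg U = 1 - nsq (G.yv (Suc J))"
proof -
  have c: "alg_state n Alg U (Suc (2*KK)) \<in> carrier_vec DD" by (rule st_c) simp
  have n1: "nsq (alg_state n Alg U (Suc (2*KK))) = 1" using st_props[of "Suc (2*KK)"] by simp
  show ?thesis unfolding prob_one_def nq_Alg accept_Alg alg_dim_eq prob_formula[OF c] n1 final_comp ..
qed

lemma lam_eq: "G.lam = influence n S U"
proof -
  have "G.s = svec n U" unfolding G.s_def svec_def ..
  then have "complex_of_real G.lam = complex_of_real (influence n S U)"
    using G.sg ip_s_Pv[OF Uc, of S] Pm_mult[OF svec_carrier[OF Uc]] unfolding G.g_def by simp
  then show ?thesis by (simp only: of_real_eq_iff)
qed

lemma main_pos: assumes "influence n S U \<ge> \<delta>" "\<delta> > 0" "10 \<le> 4^(J+2) * \<delta>"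
  shows "prob_one n Alg U \<ge> 9/10"
proof -
  have lp: "G.lam \<ge> \<delta>" using assms lam_eq by simp
  have b: "nsq (G.yv (Suc J)) * 4^(J+2) * G.lam \<le> 1" by (rule G.final_bound)
  have nn: "nsq (G.yv (Suc J)) \<ge> 0" by (rule nsq_nonneg)
  have "nsq (G.yv (Suc J)) * 10 \<le> nsq (G.yv (Suc J)) * (4^(J+2) * \<delta>)"
    using assms(3) nn by (intro mult_left_mono) auto
  also have "\<dots> \<le> nsq (G.yv (Suc J)) * (4^(J+2) * G.lam)"
    using lp nn by (intro mult_left_mono) auto
  also have "\<dots> \<le> 1" using b by (simp add: mult.assoc)
  finally have "nsq (G.yv (Suc J)) \<le> 1/10" by simp
  then show ?thesis unfolding prob_eq by simp
qed

lemma main_zero: assumes "influence n S U = 0" shows "prob_one n Alg U = 0"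
  unfolding prob_eq using G.final_zero lam_eq assms by simp

end


lemma exists_J: assumes d: "0 < \<delta>" "\<delta> \<le> (1::real)"
  shows "\<exists>J. 10 \<le> 4^(J+2) * \<delta> \<and> 4^(J+2) * \<delta> \<le> 40"
proof -
  obtain k where k: "10 / \<delta> < 4^k" using real_arch_pow[of 4 "10/\<delta>"] by auto
  have "10 \<le> 4^(k+2) * \<delta>"
  proof -
    have "10 < 4^k * \<delta>" using k d by (simp add: field_simps)
    also have "\<dots> \<le> 4^(k+2) * \<delta>" using d by (intro mult_right_mono) (auto simp: power_increasing)
    finally show ?thesis by simp
  qed
  then have ex: "\<exists>J. 10 \<le> 4^(J+2) * \<delta>" by blast
  define J where "J = (LEAST J. 10 \<le> 4^(J+2) * \<delta>)"
  have J1: "10 \<le> 4^(J+2) * \<delta>" unfolding J_def using LeastI_ex[OF ex] .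
  have J2: "4^(J+2) * \<delta> \<le> 40"
  proof (cases J)
    case 0
    then show ?thesis using d by simp
  next
    case (Suc j)
    have "\<not> 10 \<le> 4^(j+2) * \<delta>"
    proof
      assume "10 \<le> 4^(j+2) * \<delta>"
      then have "J \<le> j" unfolding J_def by (rule Least_le)
      then show False using Suc by simp
    qed
    then have "4^(j+2) * \<delta> < 10" by simp
    then show ?thesis using Suc by simp
  qed
  show ?thesis using J1 J2 by blast
qed

lemma nq_aux: "1 \<le> (x::nat) \<Longrightarrow> 2 * (2 * x - 1) + 1 \<le> 4 * x"
  by arith

theorem mainTheorem8:
  shows "\<exists>C::real. C > 0 \<and>
    (\<forall>n::nat. \<forall>S. \<forall>\<delta>::real. S \<subseteq> {..<n} \<and> 0 < \<delta> \<and> \<delta> \<le> 1 \<longrightarrow>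
      (\<exists>A. valid_alg n A \<and> real (nq A) \<le> C / sqrt \<delta> \<and>
        (\<forall>U. unitary_mat (2 ^ n) U \<longrightarrow>
          (influence n S U \<ge> \<delta> \<longrightarrow> prob_one n A U \<ge> 9 / 10) \<and>
          (influence n S U = 0 \<longrightarrow> prob_one n A U = 0))))"
proof (intro exI[of _ 7] conjI allI impI)
  fix n :: nat and S :: "nat set" and \<delta> :: real
  assume h: "S \<subseteq> {..<n} \<and> 0 < \<delta> \<and> \<delta> \<le> 1"
  then have d: "0 < \<delta>" "\<delta> \<le> 1" by auto
  obtain J where J: "10 \<le> 4^(J+2) * \<delta>" "4^(J+2) * \<delta> \<le> 40" using exists_J[OF d] by blast
  interpret I1: alg_setup n S "1\<^sub>m (2^n)" J by unfold_locales (rule unitary_one)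
  let ?A = "alg_setup.Alg n S J"
  have v: "valid_alg n ?A" by (rule I1.valid)
  have nqA: "nq ?A = 2 * (2^Suc J - 1) + 1" by (simp add: I1.Alg_def)
  have nq_le: "real (nq ?A) \<le> 2^(J+2)"
  proof -
    have p: "(1::nat) \<le> 2^J" by simp
    have "nq ?A \<le> 2^(J+2)" unfolding nqA using nq_aux[OF p] by simp
    then show ?thesis by (metis of_nat_le_iff of_nat_numeral of_nat_power)
  qed
  have "2^(J+2) * sqrt \<delta> \<le> 7"
  proof -
    have q: "((2::real)^(J+2))^2 = 4^(J+2)"
    proof -
      have "((2::real)^(J+2))^2 = 2^((J+2)*2)" by (simp only: power_mult)
      also have "\<dots> = (2^2)^(J+2)" by (simp only: power_mult[symmetric] mult.commute)
      finally show ?thesis by simp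
    qed
    have "(2^(J+2) * sqrt \<delta>)^2 = 4^(J+2) * \<delta>" using d q
      by (simp add: power_mult_distrib)
    also have "\<dots> \<le> 7^2"
    proof -
      have "(7::real)^2 = 49" by simp
      then show ?thesis using J(2) by linarith
    qed
    finally show ?thesis by (rule power2_le_imp_le) simp
  qed
  moreover have "real (nq ?A) * sqrt \<delta> \<le> 2^(J+2) * sqrt \<delta>" by (rule mult_right_mono[OF nq_le]) (use d in simp)
  ultimately have "real (nq ?A) * sqrt \<delta> \<le> 7" by linarith
  then have "real (nq ?A) \<le> 7 / sqrt \<delta>" using d by (simp add: pos_le_divide_eq)
  moreover have "(\<forall>U. unitary_mat (2 ^ n) U \<longrightarrow>
          (influence n S U \<ge> \<delta> \<longrightarrow> prob_one n ?A U \<ge> 9 / 10) \<and>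
          (influence n S U = 0 \<longrightarrow> prob_one n ?A U = 0))"
  proof (intro allI impI conjI)
    fix U assume U: "unitary_mat (2 ^ n) U"
    interpret I2: alg_setup n S U J by unfold_locales (rule U)
    show "influence n S U \<ge> \<delta> \<Longrightarrow> prob_one n ?A U \<ge> 9 / 10"
      using I2.main_pos d J by simp
    show "influence n S U = 0 \<Longrightarrow> prob_one n ?A U = 0"
      using I2.main_zero by simp
  qed
  ultimately show "\<exists>A. valid_alg n A \<and> real (nq A) \<le> 7 / sqrt \<delta> \<and>
        (\<forall>U. unitary_mat (2 ^ n) U \<longrightarrow>
          (influence n S U \<ge> \<delta> \<longrightarrow> prob_one n A U \<ge> 9 / 10) \<and>
          (influence n S U = 0 \<longrightarrow> prob_one n A U = 0))" using v by blast
qed simp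


end
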